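(* Let $k\ge1$, $\Sigma$ a Riemann surface and $\phi$ a holomorphic $k$-differential on $\Sigma$. For any subsolution $g_-$ and supersolution $g_+$ of the vortex equation on $(\Sigma,\phi)$, the conformal ratio $g_-/g_+$ has no local maximum with value greater than $1$. If $g_-/g_+$ attains a local maximum equal to $1$ at a point $p\in\Sigma$, then $g_+=g_-$ on a neighborhood of $p$.
   Context: Vortex equation: $\kappa_g=-1+\|\phi\|_g^2$ for a conformal metric $g$. A sub- (resp. super-) solution is a continuous conformal metric $g$ of Sobolev class $H^1_{loc}$ such that for every local conformal coordinate $z$, writing $g=e^u|dz|^2$ and $\phi=\phi(z)dz^k$, one has $\Delta u\ge2(e^u-e^{(1-k)u}|\phi|^2)$ (resp. $\le$) in the weak sense, $\Delta=\partial_x^2+\partial_y^2$. *)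

theory Defs
  imports "HOL-Complex_Analysis.Complex_Analysis"
begin

type_synonym 'a chart = "'a set \<times> ('a \<Rightarrow> complex)"

definition riemann_surface :: "'a::t2_space chart set \<Rightarrow> bool" where
  "riemann_surface A \<longleftrightarrow>
     connected (UNIV :: 'a set) \<and>
     (\<Union>(fst ` A) = UNIV) \<and>
     (\<forall>c\<in>A. open (fst c) \<and> open (snd c ` fst c) \<and>
             homeomorphism (fst c) (snd c ` fst c) (snd c) (inv_into (fst c) (snd c))) \<and>
     (\<forall>c\<in>A. \<forall>d\<in>A. (snd d \<circ> inv_into (fst c) (snd c)) holomorphic_on snd c ` (fst c \<inter> fst d))"

definition trans_map :: "'a chart \<Rightarrow> 'a chart \<Rightarrow> complex \<Rightarrow> complex" where
  "trans_map c d = snd d \<circ> inv_into (fst c) (snd c)"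

text \<open>A continuous conformal metric, given in every chart c by its density G c,
  i.e. g = G c z |dz|^2 on the chart.\<close>
definition conformal_metric :: "'a chart set \<Rightarrow> ('a chart \<Rightarrow> complex \<Rightarrow> real) \<Rightarrow> bool" where
  "conformal_metric A G \<longleftrightarrow>
     (\<forall>c\<in>A. continuous_on (snd c ` fst c) (G c) \<and> (\<forall>x\<in>snd c ` fst c. G c x > 0)) \<and>
     (\<forall>c\<in>A. \<forall>d\<in>A. \<forall>p\<in>fst c \<inter> fst d.
        G c (snd c p) = G d (snd d p) * (norm (deriv (trans_map c d) (snd c p)))\<^sup>2)"

text \<open>A holomorphic k-differential, given in every chart c by the coefficient Phi c,
  i.e. phi = Phi c z dz^k on the chart.\<close>
definition holomorphic_kdiff :: "'a chart set \<Rightarrow> nat \<Rightarrow> ('a chart \<Rightarrow> complex \<Rightarrow> complex) \<Rightarrow> bool" where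
  "holomorphic_kdiff A k Phi \<longleftrightarrow>
     (\<forall>c\<in>A. Phi c holomorphic_on snd c ` fst c) \<and>
     (\<forall>c\<in>A. \<forall>d\<in>A. \<forall>p\<in>fst c \<inter> fst d.
        Phi c (snd c p) = Phi d (snd d p) * (deriv (trans_map c d) (snd c p)) ^ k)"

definition pd :: "complex \<Rightarrow> (complex \<Rightarrow> real) \<Rightarrow> complex \<Rightarrow> real" where
  "pd e f z = deriv (\<lambda>t::real. f (z + of_real t * e)) 0"

text \<open>Iterated partial derivatives; True = d/dy, False = d/dx.\<close>
fun iter_pd :: "bool list \<Rightarrow> (complex \<Rightarrow> real) \<Rightarrow> complex \<Rightarrow> real" where
  "iter_pd [] f = f"
| "iter_pd (b # bs) f = pd (if b then \<i> else 1) (iter_pd bs f)"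

definition smooth_fn :: "(complex \<Rightarrow> real) \<Rightarrow> bool" where
  "smooth_fn f \<longleftrightarrow>
     (\<forall>bs. continuous_on UNIV (iter_pd bs f) \<and>
        (\<forall>z. \<forall>e\<in>{1, \<i>}. (\<lambda>t::real. iter_pd bs f (z + of_real t * e)) differentiable (at 0)))"

definition test_fn :: "complex set \<Rightarrow> (complex \<Rightarrow> real) \<Rightarrow> bool" where
  "test_fn V \<psi> \<longleftrightarrow> smooth_fn \<psi> \<and> compact (closure {z. \<psi> z \<noteq> 0}) \<and> closure {z. \<psi> z \<noteq> 0} \<subseteq> V"

definition laplacian :: "(complex \<Rightarrow> real) \<Rightarrow> complex \<Rightarrow> real" where
  "laplacian \<psi> z = iter_pd [False, False] \<psi> z + iter_pd [True, True] \<psi> z"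

definition L2_loc :: "complex set \<Rightarrow> (complex \<Rightarrow> real) \<Rightarrow> bool" where
  "L2_loc V f \<longleftrightarrow> set_borel_measurable lborel V f \<and>
     (\<forall>K. compact K \<and> K \<subseteq> V \<longrightarrow> set_integrable lborel K (\<lambda>z. (f z)\<^sup>2))"

definition H1_loc :: "complex set \<Rightarrow> (complex \<Rightarrow> real) \<Rightarrow> bool" where
  "H1_loc V u \<longleftrightarrow> L2_loc V u \<and>
     (\<forall>e\<in>{1, \<i>}. \<exists>v. L2_loc V v \<and>
        (\<forall>\<psi>. test_fn V \<psi> \<longrightarrow>
           (LINT z|lborel. u z * pd e \<psi> z) = - (LINT z|lborel. v z * \<psi> z)))"

definition weak_lap_ineq :: "bool \<Rightarrow> complex set \<Rightarrow> (complex \<Rightarrow> real) \<Rightarrow> (complex \<Rightarrow> real) \<Rightarrow> bool" where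
  "weak_lap_ineq sub V u f \<longleftrightarrow>
     (\<forall>\<psi>. test_fn V \<psi> \<and> (\<forall>z. \<psi> z \<ge> 0) \<longrightarrow>
        (if sub then (LINT z|lborel. u z * laplacian \<psi> z) \<ge> (LINT z|lborel. f z * \<psi> z)
                else (LINT z|lborel. u z * laplacian \<psi> z) \<le> (LINT z|lborel. f z * \<psi> z)))"

definition vortex_sol :: "bool \<Rightarrow> 'a chart set \<Rightarrow> nat \<Rightarrow> ('a chart \<Rightarrow> complex \<Rightarrow> complex)
    \<Rightarrow> ('a chart \<Rightarrow> complex \<Rightarrow> real) \<Rightarrow> bool" where
  "vortex_sol sub A k Phi G \<longleftrightarrow> conformal_metric A G \<and>
     (\<forall>c\<in>A. let V = snd c ` fst c; u = (\<lambda>x. ln (G c x)) in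
        H1_loc V u \<and>
        weak_lap_ineq sub V u
          (\<lambda>x. 2 * (exp (u x) - exp ((1 - real k) * u x) * (cmod (Phi c x))\<^sup>2)))"

abbreviation vortex_subsol where "vortex_subsol \<equiv> vortex_sol True"
abbreviation vortex_supersol where "vortex_supersol \<equiv> vortex_sol False"

text \<open>The conformal ratio g1/g2 as a function on the surface (independent of the chart).\<close>
definition metric_ratio :: "'a chart set \<Rightarrow> ('a chart \<Rightarrow> complex \<Rightarrow> real)
    \<Rightarrow> ('a chart \<Rightarrow> complex \<Rightarrow> real) \<Rightarrow> 'a \<Rightarrow> real" where
  "metric_ratio A G1 G2 p = (let c = (SOME c. c \<in> A \<and> p \<in> fst c) in G1 c (snd c p) / G2 c (snd c p))"

definition is_local_max :: "('a::topological_space \<Rightarrow> real) \<Rightarrow> 'a \<Rightarrow> bool" where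
  "is_local_max f p \<longleftrightarrow> (\<exists>W. open W \<and> p \<in> W \<and> (\<forall>q\<in>W. f q \<le> f p))"

end

theory Submission
  imports Defs
begin

definition sm :: "(real \<Rightarrow> real) \<Rightarrow> bool" where
  "sm f \<longleftrightarrow> (\<forall>n x. ((deriv ^^ n) f) field_differentiable (at x))"

lemma sm_diff: "sm f \<Longrightarrow> f field_differentiable (at x)"
  unfolding sm_def by (metis funpow_0)

lemma sm_DERIV: "sm f \<Longrightarrow> (f has_real_derivative deriv f x) (at x)"
  using sm_diff DERIV_deriv_iff_field_differentiable by blast

lemma sm_deriv: "sm f \<Longrightarrow> sm (deriv f)"
  unfolding sm_def by (metis funpow_Suc_right o_apply)

lemma sm_intro: "(\<And>x. f field_differentiable (at x)) \<Longrightarrow> sm (deriv f) \<Longrightarrow> sm f"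
  unfolding sm_def
  by (metis funpow_Suc_right o_apply not0_implies_Suc funpow_0)

lemma sm_cont: "sm f \<Longrightarrow> continuous_on UNIV f"
  by (meson continuous_at_imp_continuous_on field_differentiable_imp_continuous_at sm_diff)

inductive cl :: "(real \<Rightarrow> real) set \<Rightarrow> (real \<Rightarrow> real) \<Rightarrow> bool" for G where
  gen: "g \<in> G \<Longrightarrow> cl G g"
| const: "cl G (\<lambda>x. c)"
| add: "cl G f \<Longrightarrow> cl G g \<Longrightarrow> cl G (\<lambda>x. f x + g x)"
| mul: "cl G f \<Longrightarrow> cl G g \<Longrightarrow> cl G (\<lambda>x. f x * g x)"

lemma cl_step:
  assumes G: "\<And>g. g \<in> G \<Longrightarrow> (\<forall>x. g field_differentiable (at x)) \<and> cl G (deriv g)"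
  shows "cl G f \<Longrightarrow> (\<forall>x. f field_differentiable (at x)) \<and> cl G (deriv f)"
proof (induction rule: cl.induct)
  case (gen g) then show ?case using G by blast
next
  case (const c)
  have "deriv (\<lambda>x. c) = (\<lambda>x. 0)" by (rule ext) simp
  then show ?case by (auto intro: cl.const)
next
  case (add f g)
  have "deriv (\<lambda>x. f x + g x) = (\<lambda>x. deriv f x + deriv g x)"
    using add by (intro ext deriv_add) auto
  then show ?case using add by (auto intro!: cl.add field_differentiable_add)
next
  case (mul f g)
  have "deriv (\<lambda>x. f x * g x) = (\<lambda>x. f x * deriv g x + deriv f x * g x)"
    using mul by (intro ext deriv_mult) auto
  then show ?case using mul by (auto intro!: cl.add cl.mul field_differentiable_mult)
qed

lemma cl_sm:
  assumes G: "\<And>g. g \<in> G \<Longrightarrow> (\<forall>x. g field_differentiable (at x)) \<and> cl G (deriv g)"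
    and f: "cl G f"
  shows "sm f"
proof -
  have "cl G ((deriv ^^ n) f)" for n
    by (induction n) (use f cl_step[OF G] in auto)
  then show ?thesis unfolding sm_def using cl_step[OF G] by blast
qed

lemma sm_closed: "cl (Collect sm) f \<Longrightarrow> sm f"
  by (rule cl_sm) (auto intro: cl.gen sm_diff sm_deriv)

lemma sm_const: "sm (\<lambda>x. c)" by (rule sm_closed) (rule cl.const)
lemma sm_add: "sm f \<Longrightarrow> sm g \<Longrightarrow> sm (\<lambda>x. f x + g x)"
  by (rule sm_closed) (auto intro: cl.intros)
lemma sm_mul: "sm f \<Longrightarrow> sm g \<Longrightarrow> sm (\<lambda>x. f x * g x)"
  by (rule sm_closed) (auto intro: cl.intros)
lemma sm_id: "sm (\<lambda>x. x)"
proof (rule sm_intro)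
  show "sm (deriv (\<lambda>x. x))" using sm_const by (simp add: deriv_ident[abs_def])
qed (rule field_differentiable_ident)
lemma sm_minus: "sm f \<Longrightarrow> sm g \<Longrightarrow> sm (\<lambda>x. f x - g x)"
  using sm_add[of f "\<lambda>x. (-1) * g x"] sm_mul[OF sm_const, of g "-1"] by simp
lemma sm_cmul: "sm f \<Longrightarrow> sm (\<lambda>x. c * f x)"
  using sm_mul[OF sm_const] .

lemma sm_inverse:
  assumes g: "sm g" and nz: "\<And>x. g x \<noteq> 0"
  shows "sm (\<lambda>x. inverse (g x))"
proof (rule cl_sm[where G="Collect sm \<union> {\<lambda>x. inverse (g x)}"])
  fix h assume "h \<in> Collect sm \<union> {\<lambda>x. inverse (g x)}"
  then show "(\<forall>x. h field_differentiable (at x)) \<and> cl (Collect sm \<union> {\<lambda>x. inverse (g x)}) (deriv h)"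
  proof
    assume "h \<in> Collect sm" then show ?thesis by (auto intro: cl.gen sm_diff sm_deriv)
  next
    assume h: "h \<in> {\<lambda>x. inverse (g x)}"
    have d: "((\<lambda>x. inverse (g x)) has_real_derivative - (deriv g x * (inverse (g x) * inverse (g x)))) (at x)" for x
      using DERIV_inverse_fun[OF sm_DERIV[OF g] nz, of x] by (simp add: power2_eq_square divide_inverse mult.commute)
    have "deriv (\<lambda>x. inverse (g x)) = (\<lambda>x. (-1) * (deriv g x * (inverse (g x) * inverse (g x))))"
      using d by (intro ext DERIV_imp_deriv) simp
    moreover have "cl (Collect sm \<union> {\<lambda>x. inverse (g x)}) (\<lambda>x. (-1) * (deriv g x * (inverse (g x) * inverse (g x))))"
      by (intro cl.intros) (auto simp: sm_deriv[OF g])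
    ultimately show ?thesis using h d field_differentiable_def by fastforce
  qed
qed (rule cl.gen, simp)

lemma sm_affine:
  assumes "sm f" shows "sm (\<lambda>x. f (a * x + c))"
proof (rule cl_sm[where G="{h. \<exists>f. sm f \<and> h = (\<lambda>x. f (a * x + c))}"])
  fix h assume "h \<in> {h. \<exists>f. sm f \<and> h = (\<lambda>x. f (a * x + c))}"
  then obtain f where f: "sm f" "h = (\<lambda>x. f (a * x + c))" by blast
  have d: "(h has_real_derivative deriv f (a * x + c) * a) (at x)" for x
    unfolding f(2) by (rule DERIV_chain2[OF sm_DERIV[OF f(1)]]) (auto intro!: derivative_eq_intros)
  have "deriv h = (\<lambda>x. a * deriv f (a * x + c))"
    using d by (intro ext DERIV_imp_deriv) (simp add: mult.commute)
  moreover have "cl {h. \<exists>f. sm f \<and> h = (\<lambda>x. f (a * x + c))} (\<lambda>x. a * deriv f (a * x + c))"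
    by (intro cl.intros) (auto intro: sm_deriv[OF f(1)])
  ultimately show "(\<forall>x. h field_differentiable (at x)) \<and> cl {h. \<exists>f. sm f \<and> h = (\<lambda>x. f (a * x + c))} (deriv h)"
    using d field_differentiable_def by fastforce
qed (auto intro: cl.gen assms)

lemma sm_antideriv:
  assumes "\<And>x. (P has_real_derivative k x) (at x)" "sm k"
  shows "sm P"
proof (rule sm_intro)
  show "P field_differentiable at x" for x using assms(1) field_differentiable_def by blast
  have "deriv P = k" using assms(1) by (intro ext DERIV_imp_deriv) auto
  then show "sm (deriv P)" using assms(2) by simp
qed

definition flat :: "nat \<Rightarrow> real \<Rightarrow> real" where
  "flat n x = (if x > 0 then exp (- inverse x) / x ^ n else 0)"

lemma flat_tendsto0: "(flat n \<longlongrightarrow> 0) (at 0)"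
proof -
  have r: "(flat n \<longlongrightarrow> 0) (at_right 0)"
  proof -
    have "((\<lambda>y. y ^ n / exp y) \<longlongrightarrow> (0::real)) at_top" by (rule tendsto_power_div_exp_0)
    then have "((\<lambda>x. inverse x ^ n / exp (inverse x)) \<longlongrightarrow> (0::real)) (at_right 0)"
      using filterlim_compose filterlim_inverse_at_top_right by blast
    then show ?thesis
      by (rule Lim_transform_eventually)
         (auto simp: eventually_at_right_less flat_def exp_minus power_inverse field_simps
               intro!: eventually_mono[OF eventually_at_right_less[of 0]])
  qed
  have l: "(flat n \<longlongrightarrow> 0) (at_left 0)"
    by (rule Lim_transform_eventually[of "\<lambda>_. 0"]) (auto simp: flat_def eventually_at_filter)
  show ?thesis using r l by (simp add: filterlim_split_at)
qed

lemma flat_DERIV: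
  "(flat n has_real_derivative (flat (n+2) x - real n * flat (n+1) x)) (at x)"
proof (cases "x > 0")
  case True
  have "((\<lambda>x. exp (- inverse x) / x ^ n) has_real_derivative (flat (n+2) x - real n * flat (n+1) x)) (at x)"
    using True
    by (auto intro!: derivative_eq_intros simp: flat_def field_simps power2_eq_square)
       (cases n; simp add: field_simps)
  then show ?thesis
    apply (rule has_field_derivative_transform_within_open[where S="{0<..}"])
    using True by (auto simp: flat_def)
next
  case False
  show ?thesis
  proof (cases "x < 0")
    case True
    have "((\<lambda>_. 0) has_real_derivative flat (n+2) x - real n * flat (n+1) x) (at x)"
      using True by (simp add: flat_def)
    then show ?thesis
      apply (rule has_field_derivative_transform_within_open[where S="{..<0}"])
      using True by (auto simp: flat_def)
  next
    case False
    with \<open>\<not> x > 0\<close> have x: "x = 0" by simp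
    have "((\<lambda>h. (flat n (0 + h) - flat n 0) / h) \<longlongrightarrow> 0) (at 0)"
    proof (rule Lim_transform_eventually[OF flat_tendsto0[of "n+1"]])
      show "\<forall>\<^sub>F h in at 0. flat (n + 1) h = (flat n (0 + h) - flat n 0) / h"
        by (auto simp: flat_def eventually_at_filter)
    qed
    then show ?thesis using x by (simp add: DERIV_def flat_def)
  qed
qed

lemma deriv_flat: "deriv (flat n) = (\<lambda>x. flat (n+2) x + (- real n) * flat (n+1) x)"
  using flat_DERIV by (intro ext DERIV_imp_deriv) simp

lemma sm_flat: "sm (flat n)"
proof (rule cl_sm[where G="range flat"])
  fix g assume "g \<in> range flat"
  then obtain m where g: "g = flat m" by auto
  show "(\<forall>x. g field_differentiable (at x)) \<and> cl (range flat) (deriv g)"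
  proof
    show "\<forall>x. g field_differentiable (at x)" unfolding g using flat_DERIV field_differentiable_def by blast
    show "cl (range flat) (deriv g)" unfolding g deriv_flat
      by (intro cl.add cl.mul cl.const cl.gen) auto
  qed
qed (auto intro: cl.gen)

lemma flat_nonneg: "flat n x \<ge> 0" by (simp add: flat_def)
lemma flat_pos: "x > 0 \<Longrightarrow> flat n x > 0" by (simp add: flat_def)
lemma flat_zero: "x \<le> 0 \<Longrightarrow> flat n x = 0" by (simp add: flat_def)

definition antid :: "(real \<Rightarrow> real) \<Rightarrow> real \<Rightarrow> real" where
  "antid k t = integral {0..t} k"

lemma antid_DERIV:
  assumes k0: "\<And>x. x \<le> 0 \<Longrightarrow> k x = 0" and kc: "continuous_on UNIV k"
  shows "(antid k has_real_derivative k x) (at x)"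
proof (cases "x < 0")
  case True
  have "((\<lambda>_. 0) has_real_derivative k x) (at x)" using k0 True by simp
  then show ?thesis
    apply (rule has_field_derivative_transform_within_open[where S="{..<0}"])
    using True by (auto simp: antid_def)
next
  case False
  have eq: "antid k t = integral {-1..t} k" if "t > -1" for t
  proof (cases "t \<ge> 0")
    case True
    have "integral {-1..t} k = integral {-1..0} k + integral {0..t} k"
      using True by (intro Henstock_Kurzweil_Integration.integral_combine[symmetric])
        (auto intro!: integrable_continuous_real continuous_on_subset[OF kc])
    moreover have "integral {-1..0} k = integral {-1..0} (\<lambda>_::real. 0::real)"
      by (intro Henstock_Kurzweil_Integration.integral_cong) (use k0 in auto)
    ultimately show ?thesis by (simp add: antid_def)
  next
    case f: False
    have "integral {-1..t} k = integral {-1..t} (\<lambda>_. 0)" by (intro Henstock_Kurzweil_Integration.integral_cong) (use k0 f in auto)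
    then show ?thesis using f by (simp add: antid_def)
  qed
  have "((\<lambda>t. integral {-1..t} k) has_real_derivative k x) (at x within {-1..x+1})"
    using False by (intro integral_has_real_derivative continuous_on_subset[OF kc]) auto
  then have "((\<lambda>t. integral {-1..t} k) has_real_derivative k x) (at x)"
    using False by (subst (asm) at_within_interior) (auto simp: interior_atLeastAtMost_real)
  then show ?thesis
    apply (rule has_field_derivative_transform_within_open[where S="{-1<..}"])
    using False eq by auto
qed

definition bmp :: "real \<Rightarrow> real" where
  "bmp x = flat 0 (x - 1/4) * flat 0 (1 - x)"

lemma sm_bmp: "sm bmp"
proof -
  have "sm (\<lambda>x. flat 0 (1 * x + (-1/4)))" by (rule sm_affine[OF sm_flat])
  moreover have "sm (\<lambda>x. flat 0 ((-1) * x + 1))" by (rule sm_affine[OF sm_flat])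
  ultimately have "sm (\<lambda>x. flat 0 (1 * x + (-1/4)) * flat 0 ((-1) * x + 1))" by (rule sm_mul)
  then show ?thesis unfolding bmp_def[abs_def] by simp
qed

lemma bmp_cont: "continuous_on UNIV bmp" using sm_cont sm_bmp by blast
lemma bmp_nonneg: "bmp x \<ge> 0" by (simp add: bmp_def flat_nonneg)
lemma bmp_zero: "x \<le> 1/4 \<or> x \<ge> 1 \<Longrightarrow> bmp x = 0" by (auto simp: bmp_def flat_zero)
lemma bmp_pos: "1/4 < x \<Longrightarrow> x < 1 \<Longrightarrow> bmp x > 0" by (simp add: bmp_def flat_pos)

definition BB :: real where "BB = integral {0..1} bmp"

lemma BB_pos: "BB > 0"
proof -
  have "BB \<ge> 0" unfolding BB_def
    by (intro integral_nonneg integrable_continuous_real continuous_on_subset[OF bmp_cont]) (auto simp: bmp_nonneg)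
  moreover have "BB \<noteq> 0"
  proof
    assume "BB = 0"
    then have "\<forall>x\<in>{0..1}. bmp x = 0" unfolding BB_def
      by (subst (asm) integral_eq_0_iff) (auto intro: continuous_on_subset[OF bmp_cont] bmp_nonneg)
    then show False using bmp_pos[of "1/2"] by auto
  qed
  ultimately show ?thesis by simp
qed

definition stp :: "real \<Rightarrow> real" where "stp t = antid bmp t / BB"

lemma stp_DERIV: "(stp has_real_derivative bmp x / BB) (at x)"
  unfolding stp_def[abs_def]
  by (intro DERIV_cdivide antid_DERIV bmp_cont) (auto simp: bmp_zero)

lemma sm_stp: "sm stp"
  by (rule sm_antideriv[OF stp_DERIV]) (simp add: divide_inverse sm_mul sm_bmp sm_const)

lemma stp_zero: "t \<le> 1/4 \<Longrightarrow> stp t = 0"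
proof -
  assume t: "t \<le> 1/4"
  have "integral {0..t} bmp = integral {0..t} (\<lambda>_::real. 0::real)"
    by (intro Henstock_Kurzweil_Integration.integral_cong) (use t in \<open>auto simp: bmp_zero\<close>)
  then show ?thesis by (simp add: stp_def antid_def)
qed

lemma stp_one: "t \<ge> 1 \<Longrightarrow> stp t = 1"
proof -
  assume t: "t \<ge> 1"
  have "integral {0..t} bmp = integral {0..1} bmp + integral {1..t} bmp"
    using t by (intro Henstock_Kurzweil_Integration.integral_combine[symmetric])
        (auto intro!: integrable_continuous_real continuous_on_subset[OF bmp_cont])
  moreover have "integral {1..t} bmp = integral {1..t} (\<lambda>_::real. 0::real)"
    by (intro Henstock_Kurzweil_Integration.integral_cong) (auto simp: bmp_zero)
  ultimately show ?thesis using BB_pos by (simp add: stp_def antid_def BB_def)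
qed

lemma stp_mono: "s \<le> t \<Longrightarrow> stp s \<le> stp t"
proof (rule DERIV_nonneg_imp_nondecreasing[of s t stp])
  fix x show "\<exists>y. (stp has_real_derivative y) (at x) \<and> y \<ge> 0"
    using stp_DERIV[of x] BB_pos bmp_nonneg[of x] by (intro exI[of _ "bmp x / BB"]) auto
qed

lemma stp_nonneg: "stp t \<ge> 0"
  using stp_mono[of "min t 0" t] stp_zero[of "min t 0"] by auto

lemma stp_le1: "stp t \<le> 1"
  using stp_mono[of t "max t 1"] stp_one[of "max t 1"] by auto

text \<open>The profile: kk t = stp t / t (for t > 0), made globally smooth.\<close>
definition qq :: "real \<Rightarrow> real" where "qq t = t * t + flat 0 (1/4 - t)"

lemma qq_pos: "qq t > 0"
proof (cases "t < 1/4")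
  case True then show ?thesis using flat_pos[of "1/4 - t" 0] by (simp add: qq_def add_nonneg_pos)
next
  case False then have "t > 0" by simp
  then show ?thesis using flat_nonneg[of 0 "1/4 - t"] by (simp add: qq_def add_pos_nonneg)
qed

lemma sm_qq: "sm qq"
proof -
  have "sm (\<lambda>x. flat 0 ((-1) * x + 1/4))" by (rule sm_affine[OF sm_flat])
  then have "sm (\<lambda>x. x * x + flat 0 ((-1) * x + 1/4))" by (intro sm_add sm_mul sm_id)
  then show ?thesis unfolding qq_def[abs_def] by simp
qed

definition kk :: "real \<Rightarrow> real" where "kk t = stp t * t * inverse (qq t)"

lemma sm_kk: "sm kk"
proof -
  have nz: "qq x \<noteq> 0" for x using qq_pos[of x] by linarith
  show ?thesis unfolding kk_def[abs_def]
    by (rule sm_mul[OF sm_mul[OF sm_stp sm_id] sm_inverse[OF sm_qq nz]])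
qed

lemma kk_eq: "t \<ge> 1/4 \<Longrightarrow> kk t = stp t / t"
proof -
  assume t: "t \<ge> 1/4"
  then have "qq t = t * t" by (simp add: qq_def flat_zero)
  moreover have "t \<noteq> 0" using t by auto
  ultimately show ?thesis by (simp add: kk_def field_simps)
qed

lemma kk_zero: "t \<le> 1/4 \<Longrightarrow> kk t = 0"
  by (simp add: kk_def stp_zero)

lemma t_kk: "t * kk t = stp t"
  by (cases "t \<ge> 1/4") (auto simp: kk_eq kk_zero stp_zero)

lemma kk_nonneg: "kk t \<ge> 0"
  by (cases "t \<ge> 1/4") (auto simp: kk_eq kk_zero stp_nonneg)

lemma kk_le: "t > 0 \<Longrightarrow> kk t \<le> 1 / t"
  by (cases "t \<ge> 1/4") (auto simp: kk_eq kk_zero stp_le1 divide_right_mono)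

lemma kk_one: "t \<ge> 1 \<Longrightarrow> kk t = 1 / t"
  by (simp add: kk_eq stp_one)

definition HH :: "real \<Rightarrow> real" where "HH = antid kk"

lemma HH_DERIV: "(HH has_real_derivative kk x) (at x)"
  unfolding HH_def by (rule antid_DERIV) (auto simp: kk_zero sm_cont sm_kk)

lemma sm_HH: "sm HH" by (rule sm_antideriv[OF HH_DERIV sm_kk])

lemma deriv_HH: "deriv HH = kk" using HH_DERIV by (intro ext DERIV_imp_deriv)

lemma HH_log: "t \<ge> 1 \<Longrightarrow> HH t = HH 1 + ln t"
proof -
  assume t: "t \<ge> 1"
  have d: "((\<lambda>x. HH x - ln x) has_real_derivative 0) (at x)" if "1 \<le> x" for x
      using HH_DERIV[of x] kk_one[of x] that
      by (auto intro!: derivative_eq_intros)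
  have "HH t - ln t = HH 1 - ln 1"
  proof (cases "t = 1")
    case False
    show ?thesis
    proof (rule DERIV_isconst2[of 1 t])
      show "continuous_on {1..t} (\<lambda>x. HH x - ln x)"
        using d by (meson DERIV_continuous atLeastAtMost_iff continuous_at_imp_continuous_on)
    qed (use t False d in auto)
  qed simp
  then show ?thesis by simp
qed

lemma HH_diff_le: "0 < x \<Longrightarrow> x \<le> y \<Longrightarrow> HH y - HH x \<le> ln y - ln x"
proof -
  assume xy: "0 < x" "x \<le> y"
  have "HH y - ln y \<le> HH x - ln x"
  proof (rule DERIV_nonpos_imp_nonincreasing[of x y "\<lambda>t. HH t - ln t", simplified])
    show "x \<le> y" by fact
    fix t assume t0: "x \<le> t" "t \<le> y"
    then have t: "x \<le> t \<and> t \<le> y" by simp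
    then have "((\<lambda>t. HH t - ln t) has_real_derivative kk t - 1 / t) (at t)"
      using xy HH_DERIV by (auto intro!: derivative_eq_intros simp: divide_inverse)
    moreover have "kk t - 1 / t \<le> 0" using kk_le[of t] t xy by auto
    ultimately show "\<exists>y. ((\<lambda>t. HH t - ln t) has_real_derivative y) (at t) \<and> y \<le> 0" by blast
  qed
  then show ?thesis by simp
qed

definition psm :: "(complex \<Rightarrow> real) \<Rightarrow> bool" where
  "psm f \<longleftrightarrow> continuous_on UNIV f \<and>
     (\<forall>z. \<forall>e\<in>{1, \<i>}. (\<lambda>t::real. f (z + of_real t * e)) differentiable (at 0))"

inductive cl2 :: "(complex \<Rightarrow> real) set \<Rightarrow> (complex \<Rightarrow> real) \<Rightarrow> bool" for G where
  gen: "g \<in> G \<Longrightarrow> cl2 G g"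
| const: "cl2 G (\<lambda>x. c)"
| add: "cl2 G f \<Longrightarrow> cl2 G g \<Longrightarrow> cl2 G (\<lambda>x. f x + g x)"
| mul: "cl2 G f \<Longrightarrow> cl2 G g \<Longrightarrow> cl2 G (\<lambda>x. f x * g x)"

lemma pd_DERIV:
  "(\<lambda>t::real. f (z + of_real t * e)) differentiable (at 0) \<Longrightarrow>
   ((\<lambda>t::real. f (z + of_real t * e)) has_real_derivative pd e f z) (at 0)"
  unfolding pd_def using DERIV_deriv_iff_real_differentiable by blast

lemma pd_eqI: "((\<lambda>t::real. f (z + of_real t * e)) has_real_derivative D) (at 0) \<Longrightarrow> pd e f z = D"
  unfolding pd_def by (rule DERIV_imp_deriv)

lemma cl2_step:
  assumes G: "\<And>g. g \<in> G \<Longrightarrow> psm g \<and> cl2 G (pd 1 g) \<and> cl2 G (pd \<i> g)"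
  shows "cl2 G f \<Longrightarrow> psm f \<and> cl2 G (pd 1 f) \<and> cl2 G (pd \<i> f)"
proof (induction rule: cl2.induct)
  case (gen g) then show ?case using G by blast
next
  case (const c)
  have "pd e (\<lambda>x. c) = (\<lambda>x. 0)" for e by (rule ext, rule pd_eqI) simp
  then show ?case by (auto simp: psm_def intro: cl2.const)
next
  case (add f g)
  have "pd e (\<lambda>x. f x + g x) = (\<lambda>x. pd e f x + pd e g x)" if "e \<in> {1, \<i>}" for e
  proof (rule ext, rule pd_eqI)
    fix z
    show "((\<lambda>t. f (z + complex_of_real t * e) + g (z + complex_of_real t * e)) has_real_derivative pd e f z + pd e g z) (at 0)"
      using add that unfolding psm_def by (intro DERIV_add pd_DERIV) auto
  qed
  moreover have "psm (\<lambda>x. f x + g x)" using add unfolding psm_def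
    by (auto intro!: continuous_on_add differentiable_add)
  ultimately show ?case using add by (auto intro!: cl2.add)
next
  case (mul f g)
  have "pd e (\<lambda>x. f x * g x) = (\<lambda>x. pd e f x * g x + f x * pd e g x)" if "e \<in> {1, \<i>}" for e
  proof (rule ext, rule pd_eqI)
    fix z
    have df: "(\<lambda>t::real. f (z + of_real t * e)) differentiable (at 0)"
      and dg: "(\<lambda>t::real. g (z + of_real t * e)) differentiable (at 0)"
      using mul that unfolding psm_def by auto
    show "((\<lambda>t. f (z + complex_of_real t * e) * g (z + complex_of_real t * e)) has_real_derivative pd e f z * g z + f z * pd e g z) (at 0)"
      by (rule DERIV_cong[OF DERIV_mult[OF pd_DERIV[OF df] pd_DERIV[OF dg]]]) (simp add: algebra_simps)
  qed
  moreover have "psm (\<lambda>x. f x * g x)" using mul unfolding psm_def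
    by (auto intro!: continuous_on_mult differentiable_mult)
  ultimately show ?case using mul by (auto intro!: cl2.add cl2.mul)
qed

lemma cl2_smooth:
  assumes G: "\<And>g. g \<in> G \<Longrightarrow> psm g \<and> cl2 G (pd 1 g) \<and> cl2 G (pd \<i> g)"
    and f: "cl2 G f"
  shows "smooth_fn f"
proof -
  have "cl2 G (iter_pd bs f)" for bs
    by (induction bs) (use f cl2_step[OF G] in auto)
  then show ?thesis unfolding smooth_fn_def using cl2_step[OF G] psm_def by blast
qed

lemma cmod_sq: "(cmod w)\<^sup>2 = (Re w)\<^sup>2 + (Im w)\<^sup>2"
  by (simp add: cmod_def)

lemma radial_DERIV1:
  assumes D: "\<And>x. (D has_real_derivative D1 x) (at x)"
  shows "((\<lambda>t::real. D (c * (cmod (z + of_real t * 1 - z0))\<^sup>2)) has_real_derivative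
           D1 (c * (cmod (z - z0))\<^sup>2) * (2 * c * (Re z - Re z0))) (at 0)"
proof -
  have e: "(\<lambda>t::real. D (c * (cmod (z + of_real t * 1 - z0))\<^sup>2)) =
     (\<lambda>t. D (c * ((Re z - Re z0 + t)\<^sup>2 + (Im z - Im z0)\<^sup>2)))"
    by (rule ext) (simp add: cmod_sq algebra_simps)
  have inner: "((\<lambda>t. c * ((Re z - Re z0 + t)\<^sup>2 + (Im z - Im z0)\<^sup>2)) has_real_derivative 2 * c * (Re z - Re z0)) (at 0)"
    by (auto intro!: derivative_eq_intros)
  have "((\<lambda>t. D ((\<lambda>t. c * ((Re z - Re z0 + t)\<^sup>2 + (Im z - Im z0)\<^sup>2)) t)) has_real_derivative D1 ((\<lambda>t. c * ((Re z - Re z0 + t)\<^sup>2 + (Im z - Im z0)\<^sup>2)) 0) * (2 * c * (Re z - Re z0))) (at 0)"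
    by (rule DERIV_chain2[OF D inner])
  then show ?thesis unfolding e by (simp add: cmod_sq algebra_simps)
qed

lemma radial_DERIVi:
  assumes D: "\<And>x. (D has_real_derivative D1 x) (at x)"
  shows "((\<lambda>t::real. D (c * (cmod (z + of_real t * \<i> - z0))\<^sup>2)) has_real_derivative
           D1 (c * (cmod (z - z0))\<^sup>2) * (2 * c * (Im z - Im z0))) (at 0)"
proof -
  have e: "(\<lambda>t::real. D (c * (cmod (z + of_real t * \<i> - z0))\<^sup>2)) =
     (\<lambda>t. D (c * ((Re z - Re z0)\<^sup>2 + (Im z - Im z0 + t)\<^sup>2)))"
    by (rule ext) (simp add: cmod_sq algebra_simps)
  have inner: "((\<lambda>t. c * ((Re z - Re z0)\<^sup>2 + (Im z - Im z0 + t)\<^sup>2)) has_real_derivative 2 * c * (Im z - Im z0)) (at 0)"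
    by (auto intro!: derivative_eq_intros)
  have "((\<lambda>t. D ((\<lambda>t. c * ((Re z - Re z0)\<^sup>2 + (Im z - Im z0 + t)\<^sup>2)) t)) has_real_derivative D1 ((\<lambda>t. c * ((Re z - Re z0)\<^sup>2 + (Im z - Im z0 + t)\<^sup>2)) 0) * (2 * c * (Im z - Im z0))) (at 0)"
    by (rule DERIV_chain2[OF D inner])
  then show ?thesis unfolding e by (simp add: cmod_sq algebra_simps)
qed

lemma pd1_radial:
  assumes D: "\<And>x. (D has_real_derivative D1 x) (at x)"
  shows "pd 1 (\<lambda>z. D (c * (cmod (z - z0))\<^sup>2)) = (\<lambda>z. D1 (c * (cmod (z - z0))\<^sup>2) * (2 * c * (Re z - Re z0)))"
  by (rule ext, rule pd_eqI, rule radial_DERIV1[OF D])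

lemma pdi_radial:
  assumes D: "\<And>x. (D has_real_derivative D1 x) (at x)"
  shows "pd \<i> (\<lambda>z. D (c * (cmod (z - z0))\<^sup>2)) = (\<lambda>z. D1 (c * (cmod (z - z0))\<^sup>2) * (2 * c * (Im z - Im z0)))"
  by (rule ext, rule pd_eqI, rule radial_DERIVi[OF D])

lemma pd1_Re: "pd 1 (\<lambda>z. Re z - a) = (\<lambda>z. 1)"
  by (rule ext, rule pd_eqI) (auto intro!: derivative_eq_intros)
lemma pdi_Re: "pd \<i> (\<lambda>z. Re z - a) = (\<lambda>z. 0)"
  by (rule ext, rule pd_eqI) (auto intro!: derivative_eq_intros)
lemma pd1_Im: "pd 1 (\<lambda>z. Im z - a) = (\<lambda>z. 0)"
  by (rule ext, rule pd_eqI) (auto intro!: derivative_eq_intros)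
lemma pdi_Im: "pd \<i> (\<lambda>z. Im z - a) = (\<lambda>z. 1)"
  by (rule ext, rule pd_eqI) (auto intro!: derivative_eq_intros)

definition GR :: "(complex \<Rightarrow> real) set" where
  "GR = {g. \<exists>D c z0. sm D \<and> g = (\<lambda>z. D (c * (cmod (z - z0))\<^sup>2))} \<union>
        {g. \<exists>a. g = (\<lambda>z. Re z - a) \<or> g = (\<lambda>z. Im z - a)}"

lemma GR_ok: "g \<in> GR \<Longrightarrow> psm g \<and> cl2 GR (pd 1 g) \<and> cl2 GR (pd \<i> g)"
proof -
  assume "g \<in> GR"
  then consider (rad) D c z0 where "sm D" "g = (\<lambda>z. D (c * (cmod (z - z0))\<^sup>2))"
    | (re) a where "g = (\<lambda>z. Re z - a)" | (im) a where "g = (\<lambda>z. Im z - a)"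
    unfolding GR_def by blast
  then show ?thesis
  proof cases
    case rad
    note D = rad(1) and g = rad(2)
    have DD: "\<And>x. (D has_real_derivative deriv D x) (at x)" using sm_DERIV[OF D] .
    have "psm g" unfolding psm_def g
    proof
      show "continuous_on UNIV (\<lambda>z. D (c * (cmod (z - z0))\<^sup>2))"
        by (intro continuous_on_compose2[OF sm_cont[OF D]] continuous_intros) auto
      show "\<forall>z. \<forall>e\<in>{1, \<i>}. (\<lambda>t. D (c * (cmod (z + complex_of_real t * e - z0))\<^sup>2)) differentiable at 0"
        using radial_DERIV1[OF DD] radial_DERIVi[OF DD] real_differentiable_def by blast
    qed
    moreover have m: "(\<lambda>z. deriv D (c * (cmod (z - z0))\<^sup>2)) \<in> GR"
      unfolding GR_def using sm_deriv[OF D] by blast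
    have r: "(\<lambda>z. Re z - Re z0) \<in> GR" "(\<lambda>z. Im z - Im z0) \<in> GR" unfolding GR_def by blast+
    have "cl2 GR (\<lambda>z. deriv D (c * (cmod (z - z0))\<^sup>2) * (2 * c * (Re z - Re z0)))"
      by (intro cl2.mul cl2.gen cl2.const m r)
    moreover have "cl2 GR (\<lambda>z. deriv D (c * (cmod (z - z0))\<^sup>2) * (2 * c * (Im z - Im z0)))"
      by (intro cl2.mul cl2.gen cl2.const m r)
    ultimately show ?thesis unfolding g pd1_radial[OF DD] pdi_radial[OF DD] by blast
  next
    case re
    have "psm g" unfolding psm_def re
      by (auto intro!: continuous_intros derivative_eq_intros simp: real_differentiable_def)
    then show ?thesis unfolding re pd1_Re pdi_Re by (auto intro: cl2.const)
  next
    case im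
    have "psm g" unfolding psm_def im
      by (auto intro!: continuous_intros derivative_eq_intros simp: real_differentiable_def)
    then show ?thesis unfolding im pd1_Im pdi_Im by (auto intro: cl2.const)
  qed
qed

lemma smooth_radial: "sm D \<Longrightarrow> smooth_fn (\<lambda>z. D (c * (cmod (z - z0))\<^sup>2))"
  by (rule cl2_smooth[OF GR_ok]) (auto simp: GR_def intro!: cl2.gen)

lemma laplacian_radial:
  assumes D: "\<And>x. (D has_real_derivative D1 x) (at x)"
    and D1: "\<And>x. (D1 has_real_derivative D2 x) (at x)"
  shows "laplacian (\<lambda>z. D ((cmod (z - z0))\<^sup>2)) z =
     4 * ((cmod (z - z0))\<^sup>2 * D2 ((cmod (z - z0))\<^sup>2) + D1 ((cmod (z - z0))\<^sup>2))"
proof -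
  have D': "\<And>x. ((\<lambda>x. D (1 * x)) has_real_derivative D1 x) (at x)" using D by simp
  have e1: "pd 1 (\<lambda>z. D ((cmod (z - z0))\<^sup>2)) = (\<lambda>z. D1 ((cmod (z - z0))\<^sup>2) * (2 * (Re z - Re z0)))"
    using pd1_radial[OF D', of 1 z0] by simp
  have ei: "pd \<i> (\<lambda>z. D ((cmod (z - z0))\<^sup>2)) = (\<lambda>z. D1 ((cmod (z - z0))\<^sup>2) * (2 * (Im z - Im z0)))"
    using pdi_radial[OF D', of 1 z0] by simp
  have a: "pd 1 (\<lambda>z. D1 ((cmod (z - z0))\<^sup>2) * (2 * (Re z - Re z0))) z =
      D2 ((cmod (z - z0))\<^sup>2) * (2 * (Re z - Re z0)) * (2 * (Re z - Re z0)) + D1 ((cmod (z - z0))\<^sup>2) * 2"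
  proof (rule pd_eqI)
    have "((\<lambda>t. D1 (1 * (cmod (z + of_real t * 1 - z0))\<^sup>2)) has_real_derivative
           D2 (1 * (cmod (z - z0))\<^sup>2) * (2 * 1 * (Re z - Re z0))) (at 0)"
      by (rule radial_DERIV1[OF D1])
    then have "((\<lambda>t. D1 ((cmod (z + of_real t * 1 - z0))\<^sup>2) * (2 * (Re (z + of_real t * 1) - Re z0))) has_real_derivative
        D2 ((cmod (z - z0))\<^sup>2) * (2 * (Re z - Re z0)) * (2 * (Re (z + of_real 0 * 1) - Re z0)) + 2 * D1 ((cmod (z + of_real 0 * 1 - z0))\<^sup>2)) (at 0)"
      by (intro DERIV_cong[OF DERIV_mult]) (auto intro!: derivative_eq_intros)
    then show "((\<lambda>t. D1 ((cmod (z + of_real t * 1 - z0))\<^sup>2) * (2 * (Re (z + of_real t * 1) - Re z0))) has_real_derivative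
        D2 ((cmod (z - z0))\<^sup>2) * (2 * (Re z - Re z0)) * (2 * (Re z - Re z0)) + D1 ((cmod (z - z0))\<^sup>2) * 2) (at 0)"
      by (simp add: algebra_simps)
  qed
  have b: "pd \<i> (\<lambda>z. D1 ((cmod (z - z0))\<^sup>2) * (2 * (Im z - Im z0))) z =
      D2 ((cmod (z - z0))\<^sup>2) * (2 * (Im z - Im z0)) * (2 * (Im z - Im z0)) + D1 ((cmod (z - z0))\<^sup>2) * 2"
  proof (rule pd_eqI)
    have "((\<lambda>t. D1 (1 * (cmod (z + of_real t * \<i> - z0))\<^sup>2)) has_real_derivative
           D2 (1 * (cmod (z - z0))\<^sup>2) * (2 * 1 * (Im z - Im z0))) (at 0)"
      by (rule radial_DERIVi[OF D1])
    then have "((\<lambda>t. D1 ((cmod (z + of_real t * \<i> - z0))\<^sup>2) * (2 * (Im (z + of_real t * \<i>) - Im z0))) has_real_derivative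
        D2 ((cmod (z - z0))\<^sup>2) * (2 * (Im z - Im z0)) * (2 * (Im (z + of_real 0 * \<i>) - Im z0)) + 2 * D1 ((cmod (z + of_real 0 * \<i> - z0))\<^sup>2)) (at 0)"
      by (intro DERIV_cong[OF DERIV_mult]) (auto intro!: derivative_eq_intros)
    then show "((\<lambda>t. D1 ((cmod (z + of_real t * \<i> - z0))\<^sup>2) * (2 * (Im (z + of_real t * \<i>) - Im z0))) has_real_derivative
        D2 ((cmod (z - z0))\<^sup>2) * (2 * (Im z - Im z0)) * (2 * (Im z - Im z0)) + D1 ((cmod (z - z0))\<^sup>2) * 2) (at 0)"
      by (simp add: algebra_simps)
  qed
  have r2: "(cmod (z - z0))\<^sup>2 = (Re z - Re z0)\<^sup>2 + (Im z - Im z0)\<^sup>2" by (simp add: cmod_sq)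
  show ?thesis
    unfolding laplacian_def iter_pd.simps if_False if_True e1 ei a b r2
    by (simp add: algebra_simps power2_eq_square)
qed

lemma kk_ident: "kk x + x * deriv kk x = bmp x / BB"
proof -
  have "((\<lambda>t. t * kk t) has_real_derivative 1 * kk x + x * deriv kk x) (at x)"
    by (rule DERIV_cong[OF DERIV_mult[OF DERIV_ident sm_DERIV[OF sm_kk]]]) simp
  moreover have "((\<lambda>t. t * kk t) has_real_derivative bmp x / BB) (at x)"
    unfolding t_kk by (rule stp_DERIV)
  ultimately show ?thesis using DERIV_unique by fastforce
qed

definition psi :: "complex \<Rightarrow> real \<Rightarrow> real \<Rightarrow> complex \<Rightarrow> real" where
  "psi z0 r e z = HH ((cmod (z - z0))\<^sup>2 / r\<^sup>2) - HH ((cmod (z - z0))\<^sup>2 / e\<^sup>2) + 2 * ln (r / e)"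

definition Gk :: "complex \<Rightarrow> real \<Rightarrow> complex \<Rightarrow> real" where
  "Gk z0 s z = 4 * bmp ((cmod (z - z0))\<^sup>2 / s\<^sup>2) / (BB * s\<^sup>2)"

definition Dpsi :: "real \<Rightarrow> real \<Rightarrow> real \<Rightarrow> real" where
  "Dpsi r e t = HH (inverse (r\<^sup>2) * t + 0) - HH (inverse (e\<^sup>2) * t + 0) + 2 * ln (r / e)"

lemma psi_Dpsi: "psi z0 r e = (\<lambda>z. Dpsi r e (1 * (cmod (z - z0))\<^sup>2))"
  by (rule ext) (simp add: psi_def Dpsi_def divide_inverse mult.commute)

lemma sm_Dpsi: "sm (Dpsi r e)"
  unfolding Dpsi_def[abs_def]
  by (intro sm_add sm_minus sm_affine[OF sm_HH] sm_const)

lemma smooth_psi: "smooth_fn (psi z0 r e)"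
  unfolding psi_Dpsi by (rule smooth_radial[OF sm_Dpsi])

lemma cont_psi: "continuous_on UNIV (psi z0 r e)"
  using smooth_psi[of z0 r e] unfolding smooth_fn_def by (metis iter_pd.simps(1))

lemma psi_zero:
  assumes "0 < e" "e \<le> r" "cmod (z - z0) \<ge> r"
  shows "psi z0 r e z = 0"
proof -
  have r: "r > 0" using assms by simp
  have "(cmod (z - z0))\<^sup>2 \<ge> r\<^sup>2" using assms r by (simp add: power_mono)
  then have a: "(cmod (z - z0))\<^sup>2 / r\<^sup>2 \<ge> 1" using r by simp
  have "(cmod (z - z0))\<^sup>2 \<ge> e\<^sup>2" using assms by (meson order.trans power_mono less_imp_le)
  then have b: "(cmod (z - z0))\<^sup>2 / e\<^sup>2 \<ge> 1" using assms by simp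
  have pz: "cmod (z - z0) > 0" using assms by linarith
  show ?thesis
    unfolding psi_def HH_log[OF a] HH_log[OF b] using r assms pz
    by (simp add: ln_div ln_mult power2_eq_square)
qed

lemma psi_nonneg:
  assumes "0 < e" "e \<le> r"
  shows "psi z0 r e z \<ge> 0"
proof (cases "z = z0")
  case True
  then show ?thesis using assms by (simp add: psi_def)
next
  case False
  let ?t = "(cmod (z - z0))\<^sup>2"
  have t: "?t > 0" using False by simp
  have le: "?t / r\<^sup>2 \<le> ?t / e\<^sup>2" using assms t
    by (intro divide_left_mono power_mono) auto
  have "HH (?t / e\<^sup>2) - HH (?t / r\<^sup>2) \<le> ln (?t / e\<^sup>2) - ln (?t / r\<^sup>2)"
    using t assms by (intro HH_diff_le le) auto
  also have "\<dots> = 2 * ln (r / e)"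
    using t assms by (simp add: ln_div ln_mult ln_realpow)
  finally show ?thesis unfolding psi_def by simp
qed

lemma psi_split: "0 < e \<Longrightarrow> 0 < e0 \<Longrightarrow> 0 < r \<Longrightarrow> psi z0 r e z = psi z0 r e0 z + psi z0 e0 e z"
  by (simp add: psi_def ln_div)

lemma psi_mono:
  assumes "0 < e" "e \<le> e0" "e0 \<le> r"
  shows "psi z0 r e0 z \<le> psi z0 r e z"
  using psi_split[of e e0 r z0 z] psi_nonneg[of e e0 z0 z] assms by auto

lemma lap_psi:
  assumes "r \<noteq> 0" "e \<noteq> 0"
  shows "laplacian (psi z0 r e) z = Gk z0 r z - Gk z0 e z"
proof -
  define D1 where "D1 t = kk (t / r\<^sup>2) / r\<^sup>2 - kk (t / e\<^sup>2) / e\<^sup>2" for t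
  define D2 where "D2 t = deriv kk (t / r\<^sup>2) / r\<^sup>2 / r\<^sup>2 - deriv kk (t / e\<^sup>2) / e\<^sup>2 / e\<^sup>2" for t
  have e: "psi z0 r e = (\<lambda>z. Dpsi r e ((cmod (z - z0))\<^sup>2))" unfolding psi_Dpsi by simp
  have d1: "(Dpsi r e has_real_derivative D1 x) (at x)" for x
    unfolding Dpsi_def[abs_def] D1_def
    by (rule DERIV_cong[OF DERIV_add[OF DERIV_diff[OF DERIV_chain2[OF HH_DERIV] DERIV_chain2[OF HH_DERIV]]]])
       (auto intro!: derivative_eq_intros simp: divide_inverse mult.commute)
  have d2: "(D1 has_real_derivative D2 x) (at x)" for x
    unfolding D1_def[abs_def] D2_def
    by (rule DERIV_cong[OF DERIV_diff[OF DERIV_cdivide[OF DERIV_chain2[OF sm_DERIV[OF sm_kk]]] DERIV_cdivide[OF DERIV_chain2[OF sm_DERIV[OF sm_kk]]]]])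
       (auto intro!: derivative_eq_intros simp: divide_inverse mult.commute)
  have "laplacian (psi z0 r e) z = 4 * ((cmod (z - z0))\<^sup>2 * D2 ((cmod (z - z0))\<^sup>2) + D1 ((cmod (z - z0))\<^sup>2))"
    unfolding e by (rule laplacian_radial[OF d1 d2])
  also have "\<dots> = 4 * ((kk ((cmod (z - z0))\<^sup>2 / r\<^sup>2) + ((cmod (z - z0))\<^sup>2 / r\<^sup>2) * deriv kk ((cmod (z - z0))\<^sup>2 / r\<^sup>2)) / r\<^sup>2
       - (kk ((cmod (z - z0))\<^sup>2 / e\<^sup>2) + ((cmod (z - z0))\<^sup>2 / e\<^sup>2) * deriv kk ((cmod (z - z0))\<^sup>2 / e\<^sup>2)) / e\<^sup>2)"
    unfolding D1_def D2_def using assms by (simp add: field_simps power2_eq_square)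
  also have "\<dots> = Gk z0 r z - Gk z0 e z"
    unfolding kk_ident Gk_def using BB_pos by (simp add: field_simps)
  finally show ?thesis .
qed

lemma Gk_nonneg: "Gk z0 s z \<ge> 0"
  using BB_pos bmp_nonneg by (simp add: Gk_def)

lemma Gk_zero: "s \<noteq> 0 \<Longrightarrow> cmod (z - z0) \<ge> \<bar>s\<bar> \<Longrightarrow> Gk z0 s z = 0"
proof -
  assume s: "s \<noteq> 0" "cmod (z - z0) \<ge> \<bar>s\<bar>"
  then have "(cmod (z - z0))\<^sup>2 \<ge> s\<^sup>2" by (metis abs_ge_zero power2_abs power_mono)
  then have "(cmod (z - z0))\<^sup>2 / s\<^sup>2 \<ge> 1" using s by simp
  then show ?thesis by (simp add: Gk_def bmp_zero)
qed

lemma cont_Gk: "s \<noteq> 0 \<Longrightarrow> continuous_on UNIV (Gk z0 s)"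
  unfolding Gk_def using BB_pos
  by (intro continuous_intros continuous_on_compose2[OF bmp_cont]) auto

lemma psi_support: "0 < e \<Longrightarrow> e \<le> r \<Longrightarrow> closure {z. psi z0 r e z \<noteq> 0} \<subseteq> cball z0 r"
proof -
  assume a: "0 < e" "e \<le> r"
  have "{z. psi z0 r e z \<noteq> 0} \<subseteq> cball z0 r"
    using psi_zero[OF a] by (force simp: dist_norm norm_minus_commute)
  then show ?thesis by (simp add: closure_minimal)
qed

lemma test_psi:
  assumes "0 < e" "e \<le> r" "cball z0 r \<subseteq> V"
  shows "test_fn V (psi z0 r e)"
proof -
  have s: "closure {z. psi z0 r e z \<noteq> 0} \<subseteq> cball z0 r" by (rule psi_support[OF assms(1,2)])
  have "{z. psi z0 r e z \<noteq> 0} \<subseteq> cball z0 r" using closure_subset s by (rule subset_trans)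
  then have "bounded {z. psi z0 r e z \<noteq> 0}" by (rule bounded_subset[OF bounded_cball])
  then have "compact (closure {z. psi z0 r e z \<noteq> 0})" by (simp add: compact_closure)
  moreover have "closure {z. psi z0 r e z \<noteq> 0} \<subseteq> V" using s assms(3) by (rule subset_trans)
  ultimately show ?thesis unfolding test_fn_def using smooth_psi by blast
qed

lemma integral_affine_eucl:
  fixes f :: "'a::euclidean_space \<Rightarrow> real"
  assumes f[measurable]: "f \<in> borel_measurable borel" and c: "c \<noteq> 0"
  shows "(\<integral>x. f x \<partial>lborel) = \<bar>c\<bar> ^ DIM('a) * (\<integral>x. f (t + c *\<^sub>R x) \<partial>lborel)"
proof -
  have "(\<integral>x. f x \<partial>lborel) = (\<integral>x. f x \<partial>density (distr lborel borel (\<lambda>x. t + c *\<^sub>R x)) (\<lambda>_. \<bar>c\<bar> ^ DIM('a)))"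
    by (rule arg_cong[where f="\<lambda>M. integral\<^sup>L M f"]) (rule lborel_affine[OF c])
  also have "\<dots> = (\<integral>x. \<bar>c\<bar> ^ DIM('a) *\<^sub>R f x \<partial>distr lborel borel (\<lambda>x. t + c *\<^sub>R x))"
    by (rule integral_density) auto
  also have "\<dots> = (\<integral>x. \<bar>c\<bar> ^ DIM('a) *\<^sub>R f (t + c *\<^sub>R x) \<partial>lborel)"
    by (rule integral_distr) auto
  also have "\<dots> = \<bar>c\<bar> ^ DIM('a) * (\<integral>x. f (t + c *\<^sub>R x) \<partial>lborel)"
    by simp
  finally show ?thesis .
qed

lemma integrable_affine_eucl:
  fixes f :: "'a::euclidean_space \<Rightarrow> real"
  assumes f[measurable]: "f \<in> borel_measurable borel" and c: "c \<noteq> 0"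
  shows "integrable lborel (\<lambda>x. f (t + c *\<^sub>R x)) \<longleftrightarrow> integrable lborel f"
proof -
  have "integrable lborel f \<longleftrightarrow> integrable (density (distr lborel borel (\<lambda>x. t + c *\<^sub>R x)) (\<lambda>_. \<bar>c\<bar> ^ DIM('a))) f"
    by (rule arg_cong[where f="\<lambda>M. integrable M f"]) (rule lborel_affine[OF c])
  also have "\<dots> \<longleftrightarrow> integrable (distr lborel borel (\<lambda>x. t + c *\<^sub>R x)) (\<lambda>x. \<bar>c\<bar> ^ DIM('a) *\<^sub>R f x)"
    by (rule integrable_density) auto
  also have "\<dots> \<longleftrightarrow> integrable lborel (\<lambda>x. \<bar>c\<bar> ^ DIM('a) *\<^sub>R f (t + c *\<^sub>R x))"
    by (rule integrable_distr_eq) auto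
  also have "\<dots> \<longleftrightarrow> integrable lborel (\<lambda>x. f (t + c *\<^sub>R x))"
    using c by simp
  finally show ?thesis ..
qed

lemma emeasure_open_pos:
  fixes U :: "'a::euclidean_space set"
  assumes "open U" "U \<noteq> {}"
  shows "emeasure lborel U > 0"
proof -
  obtain x where x: "x \<in> U" using assms by blast
  obtain a b where ab: "box a b \<subseteq> U" "x \<in> box a b" "\<forall>i\<in>Basis. a \<bullet> i < b \<bullet> i"
    using open_contains_box[OF assms(1) x] by blast
  have "0 < emeasure lborel (box a b)"
    using ab unfolding emeasure_lborel_box_eq
    by (force intro!: prod_pos simp: mem_box algebra_simps)
  also have "\<dots> \<le> emeasure lborel U"
    using ab assms by (intro emeasure_mono) auto
  finally show ?thesis .
qed

lemma integral_pos_open: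
  fixes g :: "'a::euclidean_space \<Rightarrow> real"
  assumes int: "integrable lborel g" and nn: "\<And>x. g x \<ge> 0"
    and U: "open U" "U \<noteq> {}" and pos: "\<And>x. x \<in> U \<Longrightarrow> g x > 0"
  shows "(\<integral>x. g x \<partial>lborel) > 0"
proof -
  have "(\<integral>x. g x \<partial>lborel) \<ge> 0" using nn by simp
  moreover have "(\<integral>x. g x \<partial>lborel) \<noteq> 0"
  proof
    assume "(\<integral>x. g x \<partial>lborel) = 0"
    then have "AE x in lborel. g x = 0"
      using integral_nonneg_eq_0_iff_AE[OF int] nn by auto
    then have "AE x in lborel. x \<notin> U"
      by eventually_elim (use pos in force)
    then have "emeasure lborel U = 0"
      using AE_iff_measurable[of U lborel "\<lambda>x. x \<notin> U"] U by auto
    then show False using emeasure_open_pos[OF U] by simp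
  qed
  ultimately show ?thesis by simp
qed

lemma HH_small: "x \<le> 1/4 \<Longrightarrow> HH x = 0"
proof -
  assume x: "x \<le> 1/4"
  have "integral {0..x} kk = integral {0..x} (\<lambda>_::real. 0::real)"
    by (intro Henstock_Kurzweil_Integration.integral_cong) (use x in \<open>auto simp: kk_zero\<close>)
  then show ?thesis by (simp add: HH_def antid_def)
qed

lemma psi_center:
  assumes "0 < e" "e \<le> r" "cmod (z - z0) \<le> e / 2"
  shows "psi z0 r e z = 2 * ln (r / e)"
proof -
  have "(cmod (z - z0))\<^sup>2 \<le> (e/2)\<^sup>2" using assms by (intro power_mono) auto
  then have a: "(cmod (z - z0))\<^sup>2 / e\<^sup>2 \<le> 1/4" using assms by (simp add: field_simps power2_eq_square)
  have "(cmod (z - z0))\<^sup>2 / r\<^sup>2 \<le> (cmod (z - z0))\<^sup>2 / e\<^sup>2"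
    using assms by (intro divide_left_mono power_mono mult_pos_pos) auto
  then have b: "(cmod (z - z0))\<^sup>2 / r\<^sup>2 \<le> 1/4" using a by linarith
  show ?thesis unfolding psi_def HH_small[OF a] HH_small[OF b] by simp
qed

lemma integrable_cball:
  fixes g :: "complex \<Rightarrow> real"
  assumes "continuous_on (cball a s) g" "\<And>z. z \<notin> cball a s \<Longrightarrow> g z = 0"
  shows "integrable lborel g"
proof -
  have "integrable lborel (\<lambda>x. indicator (cball a s) x *\<^sub>R g x)"
    by (rule borel_integrable_compact) (use assms in auto)
  then show ?thesis
    by (rule Bochner_Integration.integrable_cong[THEN iffD1, rotated -1]) (auto simp: indicator_def assms(2))
qed

lemma borel_cont: "continuous_on UNIV (g :: complex \<Rightarrow> real) \<Longrightarrow> g \<in> borel_measurable borel"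
  by (rule borel_measurable_continuous_onI)

lemma Gk_scale:
  assumes s: "s > 0"
  shows "(\<integral>z. Gk z0 s z \<partial>lborel) = (\<integral>z. Gk 0 1 z \<partial>lborel)"
proof -
  have "(\<integral>z. Gk z0 s z \<partial>lborel) = \<bar>s\<bar> ^ DIM(complex) * (\<integral>y. Gk z0 s (z0 + s *\<^sub>R y) \<partial>lborel)"
    by (rule integral_affine_eucl) (use s in \<open>auto intro: borel_cont cont_Gk\<close>)
  also have "(\<lambda>y. Gk z0 s (z0 + s *\<^sub>R y)) = (\<lambda>y. Gk 0 1 y / s\<^sup>2)"
    using s by (auto simp: Gk_def norm_scaleR power_mult_distrib field_simps)
  finally show ?thesis using s by simp
qed

definition kappa :: real where "kappa = (\<integral>z. Gk 0 1 z \<partial>lborel)"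

lemma kappa_nonneg: "kappa \<ge> 0"
  unfolding kappa_def by (intro integral_nonneg_AE) (simp add: Gk_nonneg)

lemma int_Gk: "s > 0 \<Longrightarrow> (\<integral>z. Gk z0 s z \<partial>lborel) = kappa"
  using Gk_scale kappa_def by simp

lemma Gk_out: "s > 0 \<Longrightarrow> z \<notin> cball z0 s \<Longrightarrow> Gk z0 s z = 0"
  by (intro Gk_zero) (auto simp: dist_norm norm_minus_commute)

lemma integrable_wGk:
  assumes "continuous_on (cball z0 s) w" "s > 0"
  shows "integrable lborel (\<lambda>z. w z * Gk z0 s z)"
  by (rule integrable_cball[of z0 s]) (use assms Gk_out in \<open>auto intro!: continuous_intros continuous_on_subset[OF cont_Gk]\<close>)

lemma integrable_Gk: "s > 0 \<Longrightarrow> integrable lborel (Gk z0 s)"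
  using integrable_wGk[of z0 s "\<lambda>_. 1"] by simp

lemma psi_out: "0 < e \<Longrightarrow> e \<le> r \<Longrightarrow> z \<notin> cball z0 r \<Longrightarrow> psi z0 r e z = 0"
  by (intro psi_zero) (auto simp: dist_norm norm_minus_commute)

lemma integrable_Fpsi:
  assumes "continuous_on (cball z0 r) F" "0 < e" "e \<le> r"
  shows "integrable lborel (\<lambda>z. F z * psi z0 r e z)"
  by (rule integrable_cball[of z0 r]) (use assms psi_out in \<open>auto intro!: continuous_intros continuous_on_subset[OF cont_psi]\<close>)

lemma int_wGk_le:
  assumes "continuous_on (cball z0 s) w" "s > 0" "\<And>z. z \<in> cball z0 s \<Longrightarrow> w z \<le> M"
  shows "(\<integral>z. w z * Gk z0 s z \<partial>lborel) \<le> M * kappa"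
proof -
  have "(\<integral>z. w z * Gk z0 s z \<partial>lborel) \<le> (\<integral>z. M * Gk z0 s z \<partial>lborel)"
  proof (rule integral_mono[OF integrable_wGk[OF assms(1,2)]])
    show "integrable lborel (\<lambda>z. M * Gk z0 s z)" using integrable_Gk[OF assms(2)] by simp
    fix z show "w z * Gk z0 s z \<le> M * Gk z0 s z"
      using assms(3)[of z] Gk_out[OF assms(2), of z] Gk_nonneg[of z0 s z]
      by (cases "z \<in> cball z0 s") (auto intro: mult_right_mono)
  qed
  also have "\<dots> = M * kappa" using int_Gk[OF assms(2)] by simp
  finally show ?thesis .
qed

lemma int_wGk_ge:
  assumes "continuous_on (cball z0 s) w" "s > 0" "\<And>z. z \<in> cball z0 s \<Longrightarrow> w z \<ge> M"
  shows "(\<integral>z. w z * Gk z0 s z \<partial>lborel) \<ge> M * kappa"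
proof -
  have "(\<integral>z. w z * Gk z0 s z \<partial>lborel) \<ge> (\<integral>z. M * Gk z0 s z \<partial>lborel)"
  proof (rule integral_mono[OF _ integrable_wGk[OF assms(1,2)]])
    show "integrable lborel (\<lambda>z. M * Gk z0 s z)" using integrable_Gk[OF assms(2)] by simp
    fix z show "M * Gk z0 s z \<le> w z * Gk z0 s z"
      using assms(3)[of z] Gk_out[OF assms(2), of z] Gk_nonneg[of z0 s z]
      by (cases "z \<in> cball z0 s") (auto intro: mult_right_mono)
  qed
  also have "(\<integral>z. M * Gk z0 s z \<partial>lborel) = M * kappa" using int_Gk[OF assms(2)] by simp
  finally show ?thesis .
qed

lemma int_w_lap_psi:
  assumes "continuous_on (cball z0 r) w" "0 < e" "e \<le> r"
  shows "(\<integral>z. w z * laplacian (psi z0 r e) z \<partial>lborel) =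
         (\<integral>z. w z * Gk z0 r z \<partial>lborel) - (\<integral>z. w z * Gk z0 e z \<partial>lborel)"
proof -
  have r: "r > 0" using assms by simp
  have we: "continuous_on (cball z0 e) w" using assms by (auto intro: continuous_on_subset)
  have "(\<lambda>z. w z * laplacian (psi z0 r e) z) = (\<lambda>z. w z * Gk z0 r z - w z * Gk z0 e z)"
    using assms r by (auto simp: lap_psi algebra_simps)
  then show ?thesis
    using integrable_wGk[OF assms(1) r] integrable_wGk[OF we assms(2)] by simp
qed

lemma local_max_lemma:
  fixes w F :: "complex \<Rightarrow> real"
  assumes rho: "rho > 0"
    and wc: "continuous_on (cball z0 rho) w"
    and wmax: "\<And>z. z \<in> cball z0 rho \<Longrightarrow> w z \<le> w z0"
    and Fc: "continuous_on (cball z0 rho) F" and F0: "F z0 > 0"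
    and weak: "\<And>r e. 0 < e \<Longrightarrow> e \<le> r \<Longrightarrow> r < rho \<Longrightarrow>
        (\<integral>z. w z * laplacian (psi z0 r e) z \<partial>lborel) \<ge> (\<integral>z. F z * psi z0 r e z \<partial>lborel)"
  shows False
proof -
  define M where "M = w z0"
  have z0in: "z0 \<in> cball z0 rho" using rho by simp
  obtain d where d: "d > 0" "\<And>z. z \<in> cball z0 rho \<Longrightarrow> dist z z0 < d \<Longrightarrow> dist (F z) (F z0) < F z0 / 2"
    using Fc z0in F0 unfolding continuous_on_iff by (metis half_gt_zero)
  define r where "r = min (rho / 2) (d / 2)"
  have r: "r > 0" "r < rho" "r < d" using rho d by (auto simp: r_def)
  have Fpos: "F z > 0" if "z \<in> cball z0 r" for z
  proof -
    have "z \<in> cball z0 rho" "dist z z0 < d" using that r by (auto simp: dist_commute)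
    from d(2)[OF this] have "\<bar>F z - F z0\<bar> < F z0 / 2" by (simp add: dist_real_def)
    then show ?thesis by arith
  qed
  have Fcr: "continuous_on (cball z0 r) F" using Fc r by (auto intro: continuous_on_subset)
  have wcr: "continuous_on (cball z0 r) w" using wc r by (auto intro: continuous_on_subset)
  define e0 where "e0 = r / 2"
  have e0: "0 < e0" "e0 \<le> r" using r by (auto simp: e0_def)
  define c where "c = (\<integral>z. F z * psi z0 r e0 z \<partial>lborel)"
  have c: "c > 0" unfolding c_def
  proof (rule integral_pos_open[OF integrable_Fpsi[OF Fcr e0]])
    fix z show "F z * psi z0 r e0 z \<ge> 0"
      using Fpos[of z] psi_out[OF e0, of z] psi_nonneg[OF e0, of z0 z] by (cases "z \<in> cball z0 r") auto
  next
    show "open (ball z0 (e0/2))" "ball z0 (e0/2) \<noteq> {}" using e0 by auto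
  next
    fix z assume z: "z \<in> ball z0 (e0/2)"
    then have "cmod (z - z0) \<le> e0 / 2" by (simp add: dist_norm norm_minus_commute)
    then have "psi z0 r e0 z = 2 * ln (r / e0)" by (rule psi_center[OF e0])
    moreover have "ln (r / e0) > 0" using r by (simp add: e0_def)
    moreover have "z \<in> cball z0 r" using z e0 by auto
    ultimately show "F z * psi z0 r e0 z > 0" using Fpos by simp
  qed
  define eta where "eta = c / (2 * (kappa + 1))"
  have eta: "eta > 0" "eta * kappa < c"
  proof -
    show "eta > 0" using c kappa_nonneg by (simp add: eta_def)
    have "eta * kappa = c * (kappa / (2 * (kappa + 1)))" by (simp add: eta_def)
    also have "\<dots> < c * 1" using c kappa_nonneg by (intro mult_strict_left_mono) auto
    finally show "eta * kappa < c" by simp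
  qed
  obtain d2 where d2: "d2 > 0" "\<And>z. z \<in> cball z0 rho \<Longrightarrow> dist z z0 < d2 \<Longrightarrow> dist (w z) (w z0) < eta"
    using wc z0in eta unfolding continuous_on_iff by metis
  define e where "e = min e0 (d2 / 2)"
  have e: "0 < e" "e \<le> e0" "e \<le> r" using e0 d2 by (auto simp: e_def)
  have wnear: "w z \<ge> M - eta" if "z \<in> cball z0 e" for z
  proof -
    have "z \<in> cball z0 rho" "dist z z0 < d2" using that e r d2 by (auto simp: e_def dist_commute)
    from d2(2)[OF this] have "\<bar>w z - w z0\<bar> < eta" by (simp add: dist_real_def)
    then show ?thesis unfolding M_def by arith
  qed
  have "c \<le> (\<integral>z. F z * psi z0 r e z \<partial>lborel)" unfolding c_def
  proof (rule integral_mono[OF integrable_Fpsi[OF Fcr e0] integrable_Fpsi[OF Fcr e(1,3)]])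
    fix z show "F z * psi z0 r e0 z \<le> F z * psi z0 r e z"
    proof (cases "z \<in> cball z0 r")
      case True
      then show ?thesis using Fpos[OF True] psi_mono[OF e(1,2) e0(2)] by (auto intro: mult_left_mono)
    next
      case False
      then show ?thesis using psi_out[OF e0 False] psi_out[OF e(1,3) False] by simp
    qed
  qed
  also have "\<dots> \<le> (\<integral>z. w z * laplacian (psi z0 r e) z \<partial>lborel)" by (rule weak[OF e(1,3) r(2)])
  also have "\<dots> = (\<integral>z. w z * Gk z0 r z \<partial>lborel) - (\<integral>z. w z * Gk z0 e z \<partial>lborel)"
    by (rule int_w_lap_psi[OF wcr e(1,3)])
  also have "\<dots> \<le> M * kappa - (M - eta) * kappa"
  proof (rule diff_mono)
    show "(\<integral>z. w z * Gk z0 r z \<partial>lborel) \<le> M * kappa"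
      by (rule int_wGk_le[OF wcr r(1)]) (use wmax r in \<open>auto simp: M_def\<close>)
    show "(M - eta) * kappa \<le> (\<integral>z. w z * Gk z0 e z \<partial>lborel)"
      by (rule int_wGk_ge) (use wc e r wnear in \<open>auto intro: continuous_on_subset\<close>)
  qed
  also have "\<dots> = eta * kappa" by (simp add: algebra_simps)
  finally show False using eta by simp
qed

lemma cont_bound:
  fixes f :: "complex \<Rightarrow> real"
  assumes "continuous_on (cball a r) f"
  obtains K where "K > 0" "\<And>z. z \<in> cball a r \<Longrightarrow> \<bar>f z\<bar> \<le> K"
proof -
  have "compact (f ` cball a r)" by (rule compact_continuous_image[OF assms compact_cball])
  then have "bounded (f ` cball a r)" by (rule compact_imp_bounded)
  then obtain K where "K > 0" "\<forall>x\<in>f ` cball a r. norm x \<le> K" unfolding bounded_pos by blast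
  then show ?thesis using that by auto
qed

lemma deriv_zero_outside:
  fixes g g1 :: "complex \<Rightarrow> real"
  assumes e: "cmod e = 1"
    and gd: "\<And>z. ((\<lambda>t. g (z + of_real t * e)) has_real_derivative g1 z) (at 0)"
    and gs: "\<And>z. z \<notin> cball a R \<Longrightarrow> g z = 0"
    and z: "z \<notin> cball a R"
  shows "g1 z = 0"
proof -
  define d where "d = dist a z - R"
  have d: "d > 0" using z by (simp add: d_def)
  have "((\<lambda>t. g (z + of_real t * e)) has_real_derivative 0) (at 0)"
  proof (rule has_field_derivative_transform_within_open[of "\<lambda>_. 0" 0 0 "ball 0 d"])
    show "((\<lambda>_. 0) has_real_derivative 0) (at 0)" by simp
    show "open (ball (0::real) d)" "(0::real) \<in> ball 0 d" using d by auto
    fix t :: real assume t: "t \<in> ball 0 d"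
    have "dist a (z + of_real t * e) \<ge> dist a z - \<bar>t\<bar>"
      using dist_triangle[of a z "z + of_real t * e"] e by (simp add: dist_norm norm_mult)
    then have "z + of_real t * e \<notin> cball a R" using t by (auto simp: d_def)
    then show "0 = g (z + of_real t * e)" using gs by simp
  qed
  then show ?thesis using gd[of z] DERIV_unique by blast
qed

lemma shift_DERIV:
  assumes "\<And>z. ((\<lambda>t. g (z + of_real t * e)) has_real_derivative g1 z) (at 0)"
  shows "((\<lambda>t. g (z + of_real t * e)) has_real_derivative g1 (z + of_real s * e)) (at s)"
proof -
  have "((\<lambda>t. g ((z + of_real s * e) + of_real t * e)) has_real_derivative g1 (z + of_real s * e)) (at 0)"
    by (rule assms)
  then have "((\<lambda>t. g (z + of_real (t + s) * e)) has_real_derivative g1 (z + of_real s * e)) (at 0)"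
    by (simp add: algebra_simps)
  then show ?thesis using DERIV_shift[of "\<lambda>t. g (z + of_real t * e)" _ 0 s] by simp
qed

lemma ibp1:
  fixes b b1 g g1 :: "complex \<Rightarrow> real"
  assumes e: "cmod e = 1"
    and bc: "continuous_on UNIV b" and b1c: "continuous_on UNIV b1"
    and bd: "\<And>z. ((\<lambda>t. b (z + of_real t * e)) has_real_derivative b1 z) (at 0)"
    and gc: "continuous_on UNIV g" and g1c: "continuous_on UNIV g1"
    and gd: "\<And>z. ((\<lambda>t. g (z + of_real t * e)) has_real_derivative g1 z) (at 0)"
    and gs: "\<And>z. z \<notin> cball a R \<Longrightarrow> g z = 0"
  shows "(\<integral>z. b z * g1 z \<partial>lborel) = - (\<integral>z. b1 z * g z \<partial>lborel)"
proof -
  have R: "R \<ge> 0 \<or> (\<forall>z. g z = 0)" using gs by (cases "R \<ge> 0") auto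
  define h where "h n = 1 / real (Suc n)" for n
  have h: "h n > 0" "h n \<le> 1" for n by (auto simp: h_def)
  have hlim: "h \<longlonglongrightarrow> 0" unfolding h_def by (rule LIMSEQ_Suc[OF lim_const_over_n]) 
  have g1s: "g1 z = 0" if "z \<notin> cball a R" for z by (rule deriv_zero_outside[OF e gd gs that])
  obtain K where K: "K > 0" "\<And>z. z \<in> cball a (R + 2) \<Longrightarrow> \<bar>g1 z\<bar> \<le> K"
    using cont_bound[OF continuous_on_subset[OF g1c]] by blast
  obtain K' where K': "K' > 0" "\<And>z. z \<in> cball a (R + 1) \<Longrightarrow> \<bar>b1 z\<bar> \<le> K'"
    using cont_bound[OF continuous_on_subset[OF b1c]] by blast
  have meas: "f \<in> borel_measurable lborel" if "continuous_on UNIV f" for f :: "complex \<Rightarrow> real"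
    using borel_measurable_continuous_onI[OF that] by simp
  have ce: "continuous_on UNIV (\<lambda>z. z + of_real c * e)" for c by (intro continuous_intros)
  have gsh: "continuous_on UNIV (\<lambda>z. g (z + of_real c * e))" for c
    by (rule continuous_on_compose2[OF gc ce]) auto
  have bsh: "continuous_on UNIV (\<lambda>z. b (z + of_real c * e))" for c
    by (rule continuous_on_compose2[OF bc ce]) auto
  define s where "s n z = b z * ((g (z + of_real (h n) * e) - g z) / h n)" for n z
  define s' where "s' n z = ((b (z + of_real (- h n) * e) - b z) / h n) * g z" for n z
  have int_bg: "integrable lborel (\<lambda>z. b z * g (z + of_real c * e))" for c
  proof (rule integrable_cball[of "a - of_real c * e" R])
    show "continuous_on (cball (a - of_real c * e) R) (\<lambda>z. b z * g (z + of_real c * e))"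
      by (intro continuous_intros continuous_on_subset[OF bc] continuous_on_subset[OF gsh]) auto
    fix z assume "z \<notin> cball (a - of_real c * e) R"
    then have "z + of_real c * e \<notin> cball a R" by (simp add: dist_norm algebra_simps)
    then show "b z * g (z + of_real c * e) = 0" using gs by simp
  qed
  have int_bg': "integrable lborel (\<lambda>z. b (z + of_real c * e) * g z)" for c
    by (rule integrable_cball[of a R]) (use gs in \<open>auto intro!: continuous_intros continuous_on_subset[OF bsh] continuous_on_subset[OF gc]\<close>)
  have shift: "(\<integral>z. b z * g (z + of_real c * e) \<partial>lborel) = (\<integral>z. b (z + of_real (- c) * e) * g z \<partial>lborel)" for c
  proof -
    have "(\<integral>z. b (z + of_real (- c) * e) * g z \<partial>lborel) =
        \<bar>1\<bar> ^ DIM(complex) * (\<integral>z. b ((of_real c * e + 1 *\<^sub>R z) + of_real (- c) * e) * g (of_real c * e + 1 *\<^sub>R z) \<partial>lborel)"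
    proof (rule integral_affine_eucl)
      have "continuous_on UNIV (\<lambda>x. b (x + of_real (- c) * e) * g x)"
        by (intro continuous_on_mult bsh gc)
      then show "(\<lambda>x. b (x + of_real (- c) * e) * g x) \<in> borel_measurable borel"
        by (rule borel_measurable_continuous_onI)
    qed simp
    then show ?thesis by (simp add: algebra_simps)
  qed
  have eq: "(\<integral>z. s n z \<partial>lborel) = (\<integral>z. s' n z \<partial>lborel)" for n
  proof -
    have "(\<integral>z. s n z \<partial>lborel) = ((\<integral>z. b z * g (z + of_real (h n) * e) \<partial>lborel) - (\<integral>z. b z * g z \<partial>lborel)) / h n"
      using int_bg[of "h n"] int_bg[of 0] by (simp add: s_def right_diff_distrib diff_divide_distrib)
    also have "\<dots> = ((\<integral>z. b (z + of_real (- h n) * e) * g z \<partial>lborel) - (\<integral>z. b z * g z \<partial>lborel)) / h n"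
      by (simp only: shift)
    also have "\<dots> = (\<integral>z. s' n z \<partial>lborel)"
      using int_bg'[of "- h n"] int_bg'[of 0] by (simp add: s'_def left_diff_distrib diff_divide_distrib)
    finally show ?thesis .
  qed
  have hat0: "filterlim h (at 0) sequentially"
    using hlim h(1) by (auto simp: filterlim_at intro!: always_eventually less_imp_neq[symmetric])
  have hat0': "filterlim (\<lambda>n. - h n) (at 0) sequentially"
  proof -
    have "(\<lambda>n. - h n) \<longlonglongrightarrow> - 0" by (intro tendsto_minus hlim)
    moreover have "\<forall>n. - h n \<noteq> 0" using h(1) by (metis neg_0_equal_iff_equal less_irrefl)
    ultimately show ?thesis by (auto simp: filterlim_at intro!: always_eventually)
  qed
  have lim1: "(\<lambda>n. \<integral>z. s n z \<partial>lborel) \<longlonglongrightarrow> (\<integral>z. b z * g1 z \<partial>lborel)"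
  proof (rule integral_dominated_convergence[where w="\<lambda>z. indicator (cball a (R+1)) z *\<^sub>R (\<bar>b z\<bar> * K)"])
    show "(\<lambda>z. b z * g1 z) \<in> borel_measurable lborel" by (intro meas continuous_intros bc g1c)
    show "s n \<in> borel_measurable lborel" for n unfolding s_def by (intro meas continuous_intros bc gc gsh) (use h(1)[of n] in auto)
    show "integrable lborel (\<lambda>z. indicator (cball a (R+1)) z *\<^sub>R (\<bar>b z\<bar> * K))"
      by (intro borel_integrable_compact compact_cball continuous_intros continuous_on_subset[OF bc]) auto
    show "AE z in lborel. (\<lambda>n. s n z) \<longlonglongrightarrow> b z * g1 z"
    proof (rule AE_I2)
      fix z
      have "((\<lambda>t. (g (z + of_real (0 + t) * e) - g (z + of_real 0 * e)) / t) \<longlongrightarrow> g1 z) (at 0)"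
        using gd[of z] unfolding DERIV_def .
      then have "((\<lambda>t. (g (z + of_real t * e) - g z) / t) \<longlongrightarrow> g1 z) (at 0)" by simp
      from filterlim_compose[OF this hat0] show "(\<lambda>n. s n z) \<longlonglongrightarrow> b z * g1 z"
        unfolding s_def by (intro tendsto_mult tendsto_const) (simp add: o_def)
    qed
    show "AE z in lborel. norm (s n z) \<le> indicator (cball a (R+1)) z *\<^sub>R (\<bar>b z\<bar> * K)" for n
    proof (rule AE_I2)
      fix z
      show "norm (s n z) \<le> indicator (cball a (R+1)) z *\<^sub>R (\<bar>b z\<bar> * K)"
      proof (cases "z \<in> cball a (R+1)")
        case False
        then have "z \<notin> cball a R" by auto
        moreover have "z + of_real (h n) * e \<notin> cball a R"
        proof
          assume "z + of_real (h n) * e \<in> cball a R"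
          moreover have "dist a z \<le> dist a (z + of_real (h n) * e) + h n"
            using dist_triangle[of a z "z + of_real (h n) * e"] e h[of n] by (simp add: dist_norm norm_mult)
          ultimately show False using False h[of n] by auto
        qed
        ultimately show ?thesis using gs K(1) by (simp add: s_def indicator_def)
      next
        case True
        obtain xi where xi: "0 < xi" "xi < h n"
          "g (z + of_real (h n) * e) - g (z + of_real 0 * e) = (h n - 0) * g1 (z + of_real xi * e)"
          using MVT2[of 0 "h n" "\<lambda>t. g (z + of_real t * e)" "\<lambda>t. g1 (z + of_real t * e)"] h[of n]
            shift_DERIV[OF gd] by blast
        have "dist a (z + of_real xi * e) \<le> dist a z + xi"
          using dist_triangle[of a "z + of_real xi * e" z] e xi by (simp add: dist_norm norm_mult)
        then have "z + of_real xi * e \<in> cball a (R + 2)" using True xi h[of n] by auto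
        then have "\<bar>g1 (z + of_real xi * e)\<bar> \<le> K" by (rule K(2))
        moreover have "s n z = b z * g1 (z + of_real xi * e)"
          using xi h[of n] by (simp add: s_def)
        ultimately show ?thesis using True by (simp add: abs_mult mult_left_mono)
      qed
    qed
  qed
  have lim2: "(\<lambda>n. \<integral>z. s' n z \<partial>lborel) \<longlonglongrightarrow> (\<integral>z. - (b1 z * g z) \<partial>lborel)"
  proof (rule integral_dominated_convergence[where w="\<lambda>z. K' * \<bar>g z\<bar>"])
    show "(\<lambda>z. - (b1 z * g z)) \<in> borel_measurable lborel" by (intro meas continuous_intros b1c gc)
    show "s' n \<in> borel_measurable lborel" for n unfolding s'_def by (intro meas continuous_intros bc gc bsh) (use h(1)[of n] in auto)
    show "integrable lborel (\<lambda>z. K' * \<bar>g z\<bar>)"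
      by (rule integrable_cball[of a R]) (use gs in \<open>auto intro!: continuous_intros continuous_on_subset[OF gc]\<close>)
    show "AE z in lborel. (\<lambda>n. s' n z) \<longlonglongrightarrow> - (b1 z * g z)"
    proof (rule AE_I2)
      fix z
      have "((\<lambda>t. (b (z + of_real (0 + t) * e) - b (z + of_real 0 * e)) / t) \<longlongrightarrow> b1 z) (at 0)"
        using bd[of z] unfolding DERIV_def .
      then have "((\<lambda>t. (b (z + of_real t * e) - b z) / t) \<longlongrightarrow> b1 z) (at 0)" by simp
      from filterlim_compose[OF this hat0']
      have "(\<lambda>n. (b (z + of_real (- h n) * e) - b z) / (- h n)) \<longlonglongrightarrow> b1 z" by (simp add: o_def)
      then have "(\<lambda>n. - ((b (z + of_real (- h n) * e) - b z) / (- h n)) * g z) \<longlonglongrightarrow> - b1 z * g z"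
        by (intro tendsto_mult tendsto_minus tendsto_const)
      then show "(\<lambda>n. s' n z) \<longlonglongrightarrow> - (b1 z * g z)" unfolding s'_def by simp
    qed
    show "AE z in lborel. norm (s' n z) \<le> K' * \<bar>g z\<bar>" for n
    proof (rule AE_I2)
      fix z
      show "norm (s' n z) \<le> K' * \<bar>g z\<bar>"
      proof (cases "z \<in> cball a R")
        case False
        then show ?thesis using gs by (simp add: s'_def)
      next
        case True
        obtain xi where xi: "- h n < xi" "xi < 0"
          "b (z + of_real 0 * e) - b (z + of_real (- h n) * e) = (0 - (- h n)) * b1 (z + of_real xi * e)"
          using MVT2[of "- h n" 0 "\<lambda>t. b (z + of_real t * e)" "\<lambda>t. b1 (z + of_real t * e)"] h[of n]
            shift_DERIV[OF bd] by fastforce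
        have "dist a (z + of_real xi * e) \<le> dist a z + \<bar>xi\<bar>"
          using dist_triangle[of a "z + of_real xi * e" z] e by (simp add: dist_norm norm_mult)
        then have "z + of_real xi * e \<in> cball a (R + 1)" using True xi h[of n] by auto
        then have "\<bar>b1 (z + of_real xi * e)\<bar> \<le> K'" by (rule K'(2))
        moreover have "s' n z = - b1 (z + of_real xi * e) * g z"
          using xi h[of n] by (simp add: s'_def field_simps)
        ultimately show ?thesis by (simp add: abs_mult mult_right_mono)
      qed
    qed
  qed
  have "(\<integral>z. b z * g1 z \<partial>lborel) = (\<integral>z. - (b1 z * g z) \<partial>lborel)"
  proof -
    have "(\<lambda>n. \<integral>z. s' n z \<partial>lborel) \<longlonglongrightarrow> (\<integral>z. b z * g1 z \<partial>lborel)"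
      using lim1 unfolding eq .
    from LIMSEQ_unique[OF this lim2] show ?thesis .
  qed
  then show ?thesis by simp
qed

lemma smooth_iter:
  assumes "smooth_fn f"
  shows "continuous_on UNIV (iter_pd bs f)"
    and "\<And>z. e \<in> {1, \<i>} \<Longrightarrow> ((\<lambda>t. iter_pd bs f (z + of_real t * e)) has_real_derivative pd e (iter_pd bs f) z) (at 0)"
  using assms unfolding smooth_fn_def by (auto intro!: pd_DERIV)

lemma iter_zero_outside:
  assumes "smooth_fn f" "\<And>z. z \<notin> cball a R \<Longrightarrow> f z = 0"
  shows "z \<notin> cball a R \<Longrightarrow> iter_pd bs f z = 0"
proof (induction bs arbitrary: z)
  case Nil then show ?case using assms by simp
next
  case (Cons c bs)
  define e where "e = (if c then \<i> else 1)"
  have e: "e \<in> {1, \<i>}" "cmod e = 1" by (auto simp: e_def)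
  have "pd e (iter_pd bs f) z = 0"
    by (rule deriv_zero_outside[OF e(2) smooth_iter(2)[OF assms(1) e(1)]]) (use Cons in auto)
  then show ?case by (simp add: e_def)
qed

lemma ibp_dir:
  fixes b b1 b11 :: "complex \<Rightarrow> real"
  assumes f: "smooth_fn f" and fs: "\<And>z. z \<notin> cball a R \<Longrightarrow> f z = 0"
    and e: "e \<in> {1, \<i>}"
    and bc: "continuous_on UNIV b" and b1c: "continuous_on UNIV b1" and b11c: "continuous_on UNIV b11"
    and bd: "\<And>z. ((\<lambda>t. b (z + of_real t * e)) has_real_derivative b1 z) (at 0)"
    and b1d: "\<And>z. ((\<lambda>t. b1 (z + of_real t * e)) has_real_derivative b11 z) (at 0)"
  shows "(\<integral>z. b z * pd e (pd e f) z \<partial>lborel) = (\<integral>z. b11 z * f z \<partial>lborel)"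
proof -
  have e1: "cmod e = 1" using e by auto
  have c0: "continuous_on UNIV (iter_pd [] f)" by (rule smooth_iter(1)[OF f])
  have c1: "continuous_on UNIV (pd e f)"
    using smooth_iter(1)[OF f, of "[e = \<i>]"] e by auto
  have c2: "continuous_on UNIV (pd e (pd e f))"
    using smooth_iter(1)[OF f, of "[e = \<i>, e = \<i>]"] e by auto
  have d0: "((\<lambda>t. f (z + of_real t * e)) has_real_derivative pd e f z) (at 0)" for z
    using smooth_iter(2)[OF f e, of "[]"] by simp
  have d1: "((\<lambda>t. pd e f (z + of_real t * e)) has_real_derivative pd e (pd e f) z) (at 0)" for z
    using smooth_iter(2)[OF f e, of "[e = \<i>]"] e by auto
  have s1: "pd e f z = 0" if "z \<notin> cball a R" for z
    using iter_zero_outside[OF f fs that, of "[e = \<i>]"] e by auto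
  have "(\<integral>z. b z * pd e (pd e f) z \<partial>lborel) = - (\<integral>z. b1 z * pd e f z \<partial>lborel)"
    by (rule ibp1[OF e1 bc b1c bd c1 c2 d1 s1])
  also have "(\<integral>z. b1 z * pd e f z \<partial>lborel) = - (\<integral>z. b11 z * f z \<partial>lborel)"
    by (rule ibp1[OF e1 b1c b11c b1d c0[simplified] c1 d0 fs])
  finally show ?thesis by simp
qed

lemma ibp_lap:
  fixes b bx bxx bi bii :: "complex \<Rightarrow> real"
  assumes f: "smooth_fn f" and fs: "\<And>z. z \<notin> cball a R \<Longrightarrow> f z = 0"
    and bc: "continuous_on UNIV b" and bxc: "continuous_on UNIV bx" and bxxc: "continuous_on UNIV bxx"
    and bic: "continuous_on UNIV bi" and biic: "continuous_on UNIV bii"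
    and bxd: "\<And>z. ((\<lambda>t. b (z + of_real t * 1)) has_real_derivative bx z) (at 0)"
    and bxxd: "\<And>z. ((\<lambda>t. bx (z + of_real t * 1)) has_real_derivative bxx z) (at 0)"
    and bid: "\<And>z. ((\<lambda>t. b (z + of_real t * \<i>)) has_real_derivative bi z) (at 0)"
    and biid: "\<And>z. ((\<lambda>t. bi (z + of_real t * \<i>)) has_real_derivative bii z) (at 0)"
  shows "(\<integral>z. b z * laplacian f z \<partial>lborel) = (\<integral>z. (bxx z + bii z) * f z \<partial>lborel)"
proof -
  have c2: "continuous_on UNIV (pd e (pd e f))" if "e \<in> {1, \<i>}" for e
    using smooth_iter(1)[OF f, of "[e = \<i>, e = \<i>]"] that by auto
  have s2: "pd e (pd e f) z = 0" if "z \<notin> cball a R" "e \<in> {1, \<i>}" for z e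
    using iter_zero_outside[OF f fs that(1), of "[e = \<i>, e = \<i>]"] that(2) by auto
  have i1: "integrable lborel (\<lambda>z. b z * pd e (pd e f) z)" if "e \<in> {1, \<i>}" for e
    by (rule integrable_cball[of a R]) (use that s2 in \<open>auto intro!: continuous_intros continuous_on_subset[OF bc] continuous_on_subset[OF c2[OF that]]\<close>)
  have fc: "continuous_on UNIV f" using smooth_iter(1)[OF f, of "[]"] by simp
  have i2: "integrable lborel (\<lambda>z. bb z * f z)" if "continuous_on UNIV bb" for bb
    by (rule integrable_cball[of a R]) (use that fs in \<open>auto intro!: continuous_intros continuous_on_subset[OF that] continuous_on_subset[OF fc]\<close>)
  have "(\<integral>z. b z * laplacian f z \<partial>lborel) = (\<integral>z. b z * pd 1 (pd 1 f) z + b z * pd \<i> (pd \<i> f) z \<partial>lborel)"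
    by (simp add: laplacian_def algebra_simps)
  also have "\<dots> = (\<integral>z. b z * pd 1 (pd 1 f) z \<partial>lborel) + (\<integral>z. b z * pd \<i> (pd \<i> f) z \<partial>lborel)"
    using i1 by simp
  also have "\<dots> = (\<integral>z. bxx z * f z \<partial>lborel) + (\<integral>z. bii z * f z \<partial>lborel)"
    using ibp_dir[OF f fs insertI1 bc bxc bxxc bxd bxxd] ibp_dir[OF f fs insertI2[OF insertI1] bc bic biic bid biid] by simp
  also have "\<dots> = (\<integral>z. (bxx z + bii z) * f z \<partial>lborel)"
    using i2[OF bxxc] i2[OF biic] by (simp add: distrib_right)
  finally show ?thesis .
qed

lemma radial_second1:
  assumes D1: "\<And>x. (D1 has_real_derivative D2 x) (at x)"
  shows "((\<lambda>t. D1 ((cmod (z + of_real t * 1 - y))\<^sup>2) * (2 * (Re (z + of_real t * 1) - Re y))) has_real_derivative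
      D2 ((cmod (z - y))\<^sup>2) * (2 * (Re z - Re y)) * (2 * (Re z - Re y)) + 2 * D1 ((cmod (z - y))\<^sup>2)) (at 0)"
proof -
  have "((\<lambda>t. D1 (1 * (cmod (z + of_real t * 1 - y))\<^sup>2)) has_real_derivative
         D2 (1 * (cmod (z - y))\<^sup>2) * (2 * 1 * (Re z - Re y))) (at 0)"
    by (rule radial_DERIV1[OF D1])
  then have "((\<lambda>t. D1 ((cmod (z + of_real t * 1 - y))\<^sup>2) * (2 * (Re (z + of_real t * 1) - Re y))) has_real_derivative
      D2 ((cmod (z - y))\<^sup>2) * (2 * (Re z - Re y)) * (2 * (Re (z + of_real 0 * 1) - Re y)) + 2 * D1 ((cmod (z + of_real 0 * 1 - y))\<^sup>2)) (at 0)"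
    by (intro DERIV_cong[OF DERIV_mult]) (auto intro!: derivative_eq_intros)
  then show ?thesis by simp
qed

lemma radial_secondi:
  assumes D1: "\<And>x. (D1 has_real_derivative D2 x) (at x)"
  shows "((\<lambda>t. D1 ((cmod (z + of_real t * \<i> - y))\<^sup>2) * (2 * (Im (z + of_real t * \<i>) - Im y))) has_real_derivative
      D2 ((cmod (z - y))\<^sup>2) * (2 * (Im z - Im y)) * (2 * (Im z - Im y)) + 2 * D1 ((cmod (z - y))\<^sup>2)) (at 0)"
proof -
  have "((\<lambda>t. D1 (1 * (cmod (z + of_real t * \<i> - y))\<^sup>2)) has_real_derivative
         D2 (1 * (cmod (z - y))\<^sup>2) * (2 * 1 * (Im z - Im y))) (at 0)"
    by (rule radial_DERIVi[OF D1])
  then have "((\<lambda>t. D1 ((cmod (z + of_real t * \<i> - y))\<^sup>2) * (2 * (Im (z + of_real t * \<i>) - Im y))) has_real_derivative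
      D2 ((cmod (z - y))\<^sup>2) * (2 * (Im z - Im y)) * (2 * (Im (z + of_real 0 * \<i>) - Im y)) + 2 * D1 ((cmod (z + of_real 0 * \<i> - y))\<^sup>2)) (at 0)"
    by (intro DERIV_cong[OF DERIV_mult]) (auto intro!: derivative_eq_intros)
  then show ?thesis by simp
qed

lemma ibp_radial:
  assumes f: "smooth_fn f" and fs: "\<And>z. z \<notin> cball a R \<Longrightarrow> f z = 0"
    and D: "\<And>x. (D has_real_derivative D1 x) (at x)"
    and D1: "\<And>x. (D1 has_real_derivative D2 x) (at x)"
    and D2c: "continuous_on UNIV D2"
  shows "(\<integral>z. D ((cmod (z - y))\<^sup>2) * laplacian f z \<partial>lborel) =
         (\<integral>z. 4 * ((cmod (z - y))\<^sup>2 * D2 ((cmod (z - y))\<^sup>2) + D1 ((cmod (z - y))\<^sup>2)) * f z \<partial>lborel)"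
proof -
  have Dc: "continuous_on UNIV D" using D by (meson DERIV_continuous continuous_at_imp_continuous_on)
  have D1c: "continuous_on UNIV D1" using D1 by (meson DERIV_continuous continuous_at_imp_continuous_on)
  have D': "\<And>x. ((\<lambda>x. D (1 * x)) has_real_derivative D1 x) (at x)" using D by simp
  have cr: "continuous_on UNIV (\<lambda>z. (cmod (z - y))\<^sup>2)" by (intro continuous_intros)
  have c1: "continuous_on UNIV (\<lambda>z. G ((cmod (z - y))\<^sup>2))" if "continuous_on UNIV G" for G
    by (rule continuous_on_compose2[OF that cr]) auto
  have "(\<integral>z. D ((cmod (z - y))\<^sup>2) * laplacian f z \<partial>lborel) =
     (\<integral>z. ((D2 ((cmod (z - y))\<^sup>2) * (2 * (Re z - Re y)) * (2 * (Re z - Re y)) + 2 * D1 ((cmod (z - y))\<^sup>2)) +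
           (D2 ((cmod (z - y))\<^sup>2) * (2 * (Im z - Im y)) * (2 * (Im z - Im y)) + 2 * D1 ((cmod (z - y))\<^sup>2))) * f z \<partial>lborel)"
  proof (rule ibp_lap[OF f fs])
    show "continuous_on UNIV (\<lambda>z. D ((cmod (z - y))\<^sup>2))" by (rule c1[OF Dc])
    show "continuous_on UNIV (\<lambda>z. D1 ((cmod (z - y))\<^sup>2) * (2 * (Re z - Re y)))"
      by (intro continuous_intros c1[OF D1c])
    show "continuous_on UNIV (\<lambda>z. D1 ((cmod (z - y))\<^sup>2) * (2 * (Im z - Im y)))"
      by (intro continuous_intros c1[OF D1c])
    show "continuous_on UNIV (\<lambda>z. D2 ((cmod (z - y))\<^sup>2) * (2 * (Re z - Re y)) * (2 * (Re z - Re y)) + 2 * D1 ((cmod (z - y))\<^sup>2))"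
      by (intro continuous_intros c1[OF D1c] c1[OF D2c])
    show "continuous_on UNIV (\<lambda>z. D2 ((cmod (z - y))\<^sup>2) * (2 * (Im z - Im y)) * (2 * (Im z - Im y)) + 2 * D1 ((cmod (z - y))\<^sup>2))"
      by (intro continuous_intros c1[OF D1c] c1[OF D2c])
    fix z
    show "((\<lambda>t. D ((cmod (z + of_real t * 1 - y))\<^sup>2)) has_real_derivative D1 ((cmod (z - y))\<^sup>2) * (2 * (Re z - Re y))) (at 0)"
      using radial_DERIV1[OF D', of 1 z y] by simp
    show "((\<lambda>t. D ((cmod (z + of_real t * \<i> - y))\<^sup>2)) has_real_derivative D1 ((cmod (z - y))\<^sup>2) * (2 * (Im z - Im y))) (at 0)"
      using radial_DERIVi[OF D', of 1 z y] by simp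
    show "((\<lambda>t. D1 ((cmod (z + of_real t * 1 - y))\<^sup>2) * (2 * (Re (z + of_real t * 1) - Re y))) has_real_derivative
      D2 ((cmod (z - y))\<^sup>2) * (2 * (Re z - Re y)) * (2 * (Re z - Re y)) + 2 * D1 ((cmod (z - y))\<^sup>2)) (at 0)"
      by (rule radial_second1[OF D1])
    show "((\<lambda>t. D1 ((cmod (z + of_real t * \<i> - y))\<^sup>2) * (2 * (Im (z + of_real t * \<i>) - Im y))) has_real_derivative
      D2 ((cmod (z - y))\<^sup>2) * (2 * (Im z - Im y)) * (2 * (Im z - Im y)) + 2 * D1 ((cmod (z - y))\<^sup>2)) (at 0)"
      by (rule radial_secondi[OF D1])
  qed
  also have "\<dots> = (\<integral>z. 4 * ((cmod (z - y))\<^sup>2 * D2 ((cmod (z - y))\<^sup>2) + D1 ((cmod (z - y))\<^sup>2)) * f z \<partial>lborel)"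
  proof (rule Bochner_Integration.integral_cong[OF refl])
    fix z
    have r2: "(cmod (z - y))\<^sup>2 = (Re z - Re y)\<^sup>2 + (Im z - Im y)\<^sup>2" by (simp add: cmod_sq)
    show "((D2 ((cmod (z - y))\<^sup>2) * (2 * (Re z - Re y)) * (2 * (Re z - Re y)) + 2 * D1 ((cmod (z - y))\<^sup>2)) +
           (D2 ((cmod (z - y))\<^sup>2) * (2 * (Im z - Im y)) * (2 * (Im z - Im y)) + 2 * D1 ((cmod (z - y))\<^sup>2))) * f z =
          4 * ((cmod (z - y))\<^sup>2 * D2 ((cmod (z - y))\<^sup>2) + D1 ((cmod (z - y))\<^sup>2)) * f z"
      unfolding r2 by (simp add: algebra_simps power2_eq_square)
  qed
  finally show ?thesis .
qed

definition gb :: "real \<Rightarrow> complex \<Rightarrow> real \<Rightarrow> complex \<Rightarrow> real" where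
  "gb \<alpha> y R z = exp (- \<alpha> * (cmod (z - y))\<^sup>2) - exp (- \<alpha> * R\<^sup>2)"

definition gl :: "real \<Rightarrow> complex \<Rightarrow> complex \<Rightarrow> real" where
  "gl \<alpha> y z = 4 * ((cmod (z - y))\<^sup>2 * \<alpha>\<^sup>2 - \<alpha>) * exp (- \<alpha> * (cmod (z - y))\<^sup>2)"

lemma cont_gb: "continuous_on UNIV (gb \<alpha> y R)"
  unfolding gb_def by (intro continuous_intros)

lemma cont_gl: "continuous_on UNIV (gl \<alpha> y)"
  unfolding gl_def by (intro continuous_intros)

lemma ibp_gauss:
  assumes f: "smooth_fn f" and fs: "\<And>z. z \<notin> cball a R' \<Longrightarrow> f z = 0"
  shows "(\<integral>z. gb \<alpha> y R z * laplacian f z \<partial>lborel) = (\<integral>z. gl \<alpha> y z * f z \<partial>lborel)"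
proof -
  have D: "((\<lambda>t. exp (- \<alpha> * t) - exp (- \<alpha> * R\<^sup>2)) has_real_derivative - \<alpha> * exp (- \<alpha> * x)) (at x)" for x
    by (auto intro!: derivative_eq_intros)
  have D1: "((\<lambda>t. - \<alpha> * exp (- \<alpha> * t)) has_real_derivative \<alpha>\<^sup>2 * exp (- \<alpha> * x)) (at x)" for x
    by (auto intro!: derivative_eq_intros simp: power2_eq_square)
  have D2c: "continuous_on UNIV (\<lambda>x. \<alpha>\<^sup>2 * exp (- \<alpha> * x))" by (intro continuous_intros)
  show ?thesis
    using ibp_radial[OF f fs D D1 D2c, where y=y]
    by (simp add: gb_def gl_def algebra_simps)
qed

lemma ibp_quad:
  assumes f: "smooth_fn f" and fs: "\<And>z. z \<notin> cball a R' \<Longrightarrow> f z = 0"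
  shows "(\<integral>z. (cmod (z - y))\<^sup>2 / 4 * laplacian f z \<partial>lborel) = (\<integral>z. f z \<partial>lborel)"
proof -
  have D: "((\<lambda>t. t / 4) has_real_derivative 1/4) (at x)" for x :: real
    by (auto intro!: derivative_eq_intros)
  have D1: "((\<lambda>t. 1/4) has_real_derivative 0) (at x)" for x :: real
    by (auto intro!: derivative_eq_intros)
  have D2c: "continuous_on UNIV (\<lambda>x::real. 0::real)" by (intro continuous_intros)
  show ?thesis
    using ibp_radial[OF f fs D D1 D2c, where y=y] by simp
qed

lemma lap_psi_cont: "0 < e \<Longrightarrow> e \<le> r \<Longrightarrow> continuous_on UNIV (laplacian (psi q r e))"
proof -
  assume a: "0 < e" "e \<le> r"
  have "laplacian (psi q r e) = (\<lambda>z. Gk q r z - Gk q e z)" using a by (intro ext lap_psi) auto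
  then show ?thesis using a by (auto intro!: continuous_intros cont_Gk)
qed

lemma lap_psi_out: "0 < e \<Longrightarrow> e \<le> r \<Longrightarrow> z \<notin> cball q r \<Longrightarrow> laplacian (psi q r e) z = 0"
proof -
  assume a: "0 < e" "e \<le> r" "z \<notin> cball q r"
  then have "z \<notin> cball q e" by auto
  then show ?thesis using a by (simp add: lap_psi Gk_out)
qed

lemma integrable_lap:
  assumes "continuous_on (cball q r) w" "0 < e" "e \<le> r"
  shows "integrable lborel (\<lambda>z. w z * laplacian (psi q r e) z)"
  by (rule integrable_cball[of q r]) (use assms lap_psi_out in \<open>auto intro!: continuous_intros continuous_on_subset[OF lap_psi_cont]\<close>)

lemma annulus_min:
  fixes h :: "complex \<Rightarrow> real"
  assumes R: "R > 0" and K: "K \<ge> 0" and al: "\<alpha> > 0"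
    and alK: "\<And>t. t \<ge> R\<^sup>2 / 4 \<Longrightarrow> 4 * \<alpha>\<^sup>2 * t - 4 * \<alpha> - K > 0"
    and m: "m > 0"
    and hc: "continuous_on (cball y R) h"
    and hin: "\<And>z. dist y z = R / 2 \<Longrightarrow> h z \<ge> m * gb \<alpha> y R z"
    and hnn: "\<And>z. z \<in> cball y R \<Longrightarrow> h z \<ge> 0"
    and weak: "\<And>q r e. 0 < e \<Longrightarrow> e \<le> r \<Longrightarrow> cball q r \<subseteq> ball y R \<Longrightarrow>
        (\<integral>z. h z * laplacian (psi q r e) z \<partial>lborel) \<le> K * (\<integral>z. h z * psi q r e z \<partial>lborel)"
  shows "\<And>z. R / 2 \<le> dist y z \<Longrightarrow> dist y z \<le> R \<Longrightarrow> h z \<ge> m * gb \<alpha> y R z"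
proof -
  define A where "A = cball y R - ball y (R/2)"
  have A: "compact A" "A \<noteq> {}" "A \<subseteq> cball y R"
  proof -
    show "compact A" unfolding A_def by (intro compact_diff compact_cball open_ball)
    have "y + of_real R \<in> A" using R by (simp add: A_def dist_norm)
    then show "A \<noteq> {}" by blast
    show "A \<subseteq> cball y R" by (auto simp: A_def)
  qed
  define v where "v z = h z - m * gb \<alpha> y R z" for z
  have vc: "continuous_on (cball y R) v" unfolding v_def
    by (intro continuous_intros hc continuous_on_subset[OF cont_gb]) auto
  obtain zs where zs: "zs \<in> A" "\<And>z. z \<in> A \<Longrightarrow> v zs \<le> v z"
    using continuous_attains_inf[OF A(1) A(2) continuous_on_subset[OF vc A(3)]] by blast
  have "v zs \<ge> 0"
  proof (rule ccontr)
    assume neg: "\<not> v zs \<ge> 0"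
    have ds: "R/2 \<le> dist y zs" "dist y zs \<le> R" using zs(1) by (auto simp: A_def)
    have n1: "dist y zs \<noteq> R / 2"
    proof
      assume "dist y zs = R / 2"
      then have "v zs \<ge> 0" using hin[of zs] by (simp add: v_def)
      then show False using neg by simp
    qed
    have n2: "dist y zs \<noteq> R"
    proof
      assume "dist y zs = R"
      then have "gb \<alpha> y R zs = 0" by (simp add: gb_def dist_norm norm_minus_commute)
      then have "v zs \<ge> 0" using hnn[of zs] ds by (simp add: v_def)
      then show False using neg by simp
    qed
    define rr where "rr = min (dist y zs - R/2) (R - dist y zs) / 2"
    have rr: "rr > 0" using ds n1 n2 by (simp add: rr_def)
    have ball_in: "cball zs rr \<subseteq> A"
    proof
      fix z assume "z \<in> cball zs rr"
      then have "dist zs z \<le> rr" by simp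
      moreover have "dist y zs \<le> dist y z + dist zs z" "dist y z \<le> dist y zs + dist zs z"
        by (metis dist_commute dist_triangle)+
      ultimately show "z \<in> A" unfolding A_def rr_def by auto
    qed
    have ball_in2: "cball zs r \<subseteq> ball y R" if "r < rr" for r
    proof
      fix z assume "z \<in> cball zs r"
      then have "dist zs z \<le> r" by simp
      moreover have "dist y z \<le> dist y zs + dist zs z" by (rule dist_triangle)
      moreover have "2 * r < R - dist y zs" using that unfolding rr_def by (simp add: min_def split: if_splits)
      moreover have "0 \<le> dist zs z" by simp
      ultimately show "z \<in> ball y R" unfolding mem_ball by linarith
    qed
    have hcA: "continuous_on (cball zs rr) h" using hc ball_in A(3) by (auto intro: continuous_on_subset)
    define F where "F z = m * gl \<alpha> y z - K * h z" for z
    show False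
    proof (rule local_max_lemma[OF rr, of zs "\<lambda>z. - v z" F])
      show "continuous_on (cball zs rr) (\<lambda>z. - v z)"
        using vc ball_in A(3) by (auto intro!: continuous_intros intro: continuous_on_subset)
      show "\<And>z. z \<in> cball zs rr \<Longrightarrow> - v z \<le> - v zs" using zs(2) ball_in by auto
      show "continuous_on (cball zs rr) F" unfolding F_def
        by (intro continuous_intros hcA continuous_on_subset[OF cont_gl]) auto
      let ?t = "(cmod (zs - y))\<^sup>2"
      have t: "?t \<ge> R\<^sup>2 / 4"
      proof -
        have "(R/2)\<^sup>2 \<le> (cmod (zs - y))\<^sup>2" using ds R by (intro power_mono) (auto simp: dist_norm norm_minus_commute)
        then show ?thesis by (simp add: power2_eq_square)
      qed
      have "gl \<alpha> y zs - K * gb \<alpha> y R zs = exp (- \<alpha> * ?t) * (4 * \<alpha>\<^sup>2 * ?t - 4 * \<alpha> - K) + K * exp (- \<alpha> * R\<^sup>2)"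
        by (simp add: gl_def gb_def algebra_simps)
      also have "\<dots> > 0" using alK[OF t] K by (intro add_pos_nonneg mult_pos_pos) auto
      finally have p: "gl \<alpha> y zs - K * gb \<alpha> y R zs > 0" .
      have "F zs = m * (gl \<alpha> y zs - K * gb \<alpha> y R zs) + K * (- v zs)"
        by (simp add: F_def v_def algebra_simps)
      moreover have "K * (- v zs) \<ge> 0" using neg K by (intro mult_nonneg_nonneg) auto
      moreover have "m * (gl \<alpha> y zs - K * gb \<alpha> y R zs) > 0" using p m by simp
      ultimately show "F zs > 0" by linarith
    next
      fix r e assume re: "0 < e" "e \<le> r" "r < rr"
      have r: "r > 0" using re by simp
      have hr: "continuous_on (cball zs r) h" using hcA re by (auto intro: continuous_on_subset)
      have gbr: "continuous_on (cball zs r) (gb \<alpha> y R)" by (rule continuous_on_subset[OF cont_gb]) auto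
      have glr: "continuous_on (cball zs r) (gl \<alpha> y)" by (rule continuous_on_subset[OF cont_gl]) auto
      have fs: "\<And>z. z \<notin> cball zs r \<Longrightarrow> psi zs r e z = 0" using psi_out[OF re(1,2)] by blast
      have eq1: "(\<integral>z. - v z * laplacian (psi zs r e) z \<partial>lborel) =
          - (\<integral>z. h z * laplacian (psi zs r e) z \<partial>lborel) + m * (\<integral>z. gb \<alpha> y R z * laplacian (psi zs r e) z \<partial>lborel)"
        using integrable_lap[OF hr re(1,2)] integrable_lap[OF gbr re(1,2)]
        by (simp add: v_def algebra_simps)
      have eq2: "(\<integral>z. gb \<alpha> y R z * laplacian (psi zs r e) z \<partial>lborel) = (\<integral>z. gl \<alpha> y z * psi zs r e z \<partial>lborel)"
        by (rule ibp_gauss[OF smooth_psi fs])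
      have ineq: "(\<integral>z. h z * laplacian (psi zs r e) z \<partial>lborel) \<le> K * (\<integral>z. h z * psi zs r e z \<partial>lborel)"
        using weak[OF re(1,2) ball_in2[OF re(3)]] .
      have "(\<integral>z. - v z * laplacian (psi zs r e) z \<partial>lborel) \<ge>
          - (K * (\<integral>z. h z * psi zs r e z \<partial>lborel)) + m * (\<integral>z. gl \<alpha> y z * psi zs r e z \<partial>lborel)"
        unfolding eq1 eq2 using ineq by linarith
      moreover have "(\<integral>z. F z * psi zs r e z \<partial>lborel) =
          - (K * (\<integral>z. h z * psi zs r e z \<partial>lborel)) + m * (\<integral>z. gl \<alpha> y z * psi zs r e z \<partial>lborel)"
        using integrable_Fpsi[OF hr re(1,2)] integrable_Fpsi[OF glr re(1,2)]
        by (simp add: F_def algebra_simps)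
      ultimately show "(\<integral>z. F z * psi zs r e z \<partial>lborel) \<le> (\<integral>z. - v z * laplacian (psi zs r e) z \<partial>lborel)"
        by simp
    qed
  qed
  fix z assume "R / 2 \<le> dist y z" "dist y z \<le> R"
  then have "z \<in> A" by (simp add: A_def)
  then have "v z \<ge> 0" using zs(2) \<open>v zs \<ge> 0\<close> by force
  then show "h z \<ge> m * gb \<alpha> y R z" by (simp add: v_def)
qed

lemma measurable_cball:
  fixes g :: "complex \<Rightarrow> real"
  assumes "continuous_on (cball a s) g" "\<And>z. z \<notin> cball a s \<Longrightarrow> g z = 0"
  shows "g \<in> borel_measurable borel"
proof -
  have "(\<lambda>x. indicator (cball a s) x *\<^sub>R g x) \<in> borel_measurable borel"
    by (rule borel_measurable_continuous_on_indicator) (use assms in auto)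
  moreover have "(\<lambda>x. indicator (cball a s) x *\<^sub>R g x) = g"
  proof
    fix x show "indicator (cball a s) x *\<^sub>R g x = g x"
      using assms(2)[of x] by (cases "x \<in> cball a s") auto
  qed
  ultimately show ?thesis by simp
qed

lemma scale_Gk_int:
  assumes s: "s > 0" and hc: "continuous_on (cball a s) h"
  shows "(\<integral>z. h z * Gk a s z \<partial>lborel) = (\<integral>y. h (a + s *\<^sub>R y) * Gk 0 1 y \<partial>lborel)"
proof -
  have m: "(\<lambda>z. h z * Gk a s z) \<in> borel_measurable borel"
    by (rule measurable_cball[of a s]) (use hc s Gk_out in \<open>auto intro!: continuous_intros continuous_on_subset[OF cont_Gk]\<close>)
  have "(\<integral>z. h z * Gk a s z \<partial>lborel) = \<bar>s\<bar> ^ DIM(complex) * (\<integral>y. h (a + s *\<^sub>R y) * Gk a s (a + s *\<^sub>R y) \<partial>lborel)"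
    using s by (intro integral_affine_eucl[OF m]) auto
  also have "\<dots> = (\<integral>y. h (a + s *\<^sub>R y) * Gk 0 1 y \<partial>lborel)"
  proof -
    have "(\<lambda>y. h (a + s *\<^sub>R y) * Gk a s (a + s *\<^sub>R y)) = (\<lambda>y. (h (a + s *\<^sub>R y) * Gk 0 1 y) / s\<^sup>2)"
      using s by (auto simp: Gk_def norm_scaleR power_mult_distrib field_simps)
    then show ?thesis using s by simp
  qed
  finally show ?thesis .
qed

lemma cmod_diff_sq: "(cmod (a - b))\<^sup>2 = (cmod a)\<^sup>2 - 2 * Re (a * cnj b) + (cmod b)\<^sup>2"
  unfolding cmod_sq by (simp add: power2_eq_square algebra_simps)

lemma int_psi_le:
  assumes "0 < e" "e \<le> r"
  shows "(\<integral>z. psi q r e z \<partial>lborel) \<le> r\<^sup>2 / 4 * kappa"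
proof -
  have r: "r > 0" using assms by simp
  have fs: "\<And>z. z \<notin> cball q r \<Longrightarrow> psi q r e z = 0" using psi_out[OF assms] by blast
  have wc: "continuous_on (cball q r) (\<lambda>z. (cmod (z - q))\<^sup>2 / 4)" by (intro continuous_intros) auto
  have "(\<integral>z. psi q r e z \<partial>lborel) = (\<integral>z. (cmod (z - q))\<^sup>2 / 4 * laplacian (psi q r e) z \<partial>lborel)"
    by (rule ibp_quad[OF smooth_psi fs, symmetric])
  also have "\<dots> = (\<integral>z. (cmod (z - q))\<^sup>2 / 4 * Gk q r z \<partial>lborel) - (\<integral>z. (cmod (z - q))\<^sup>2 / 4 * Gk q e z \<partial>lborel)"
    by (rule int_w_lap_psi[OF wc assms])
  also have "\<dots> \<le> r\<^sup>2 / 4 * kappa - 0 * kappa"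
  proof (rule diff_mono)
    show "(\<integral>z. (cmod (z - q))\<^sup>2 / 4 * Gk q r z \<partial>lborel) \<le> r\<^sup>2 / 4 * kappa"
    proof (rule int_wGk_le[OF wc r])
      fix z assume "z \<in> cball q r"
      then have "cmod (z - q) \<le> r" by (simp add: dist_norm norm_minus_commute)
      then have "(cmod (z - q))\<^sup>2 \<le> r\<^sup>2" by (intro power_mono) auto
      then show "(cmod (z - q))\<^sup>2 / 4 \<le> r\<^sup>2 / 4" by simp
    qed
    show "0 * kappa \<le> (\<integral>z. (cmod (z - q))\<^sup>2 / 4 * Gk q e z \<partial>lborel)"
      by (rule int_wGk_ge) (use assms in \<open>auto intro!: continuous_intros\<close>)
  qed
  finally show ?thesis by simp
qed

lemma hopf_geom:
  fixes q n w :: complex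
  assumes R: "R > 0" and n: "cmod n = 1" and r: "r > 0" "r \<le> R / 2"
    and w: "1/4 < (cmod w)\<^sup>2" "(cmod w)\<^sup>2 < 1" "Re (w * cnj n) > cmod w / 2"
    and al: "\<alpha> > 0"
  shows "R / 2 \<le> dist (q + of_real R * n) (q + r *\<^sub>R w)"
    and "dist (q + of_real R * n) (q + r *\<^sub>R w) \<le> R"
    and "gb \<alpha> (q + of_real R * n) R (q + r *\<^sub>R w) \<ge> exp (- \<alpha> * R\<^sup>2) * \<alpha> * r * R / 4"
proof -
  have w1: "cmod w < 1" using w(2) by (metis abs_norm_cancel abs_square_less_1)
  have w2: "cmod w > 1/2"
  proof (rule ccontr)
    assume "\<not> cmod w > 1/2"
    then have "(cmod w)\<^sup>2 \<le> (1/2)\<^sup>2" by (intro power_mono) auto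
    then show False using w(1) by (simp add: power2_eq_square)
  qed
  define s where "s = dist (q + of_real R * n) (q + r *\<^sub>R w)"
  have s_eq: "s = cmod (r *\<^sub>R w - of_real R * n)" by (simp add: s_def dist_norm norm_minus_commute)
  have rw: "r * cmod w \<le> R / 2" using r w1 by (metis le_less_trans less_eq_real_def mult_less_cancel_left1 not_less)
  have s2: "s\<^sup>2 = r\<^sup>2 * (cmod w)\<^sup>2 - 2 * r * R * Re (w * cnj n) + R\<^sup>2"
    unfolding s_eq cmod_diff_sq using n R r
    by (simp add: norm_scaleR power_mult_distrib scaleR_conv_of_real mult.assoc)
       (simp add: algebra_simps norm_mult power_mult_distrib)
  have "2 * r * R * Re (w * cnj n) \<ge> 2 * r * R * (cmod w / 2)"
    using w(3) r R by (intro mult_left_mono) auto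
  then have s2le: "s\<^sup>2 \<le> R\<^sup>2 - r * R * cmod w + r\<^sup>2 * (cmod w)\<^sup>2" using s2 by simp
  have "r\<^sup>2 * (cmod w)\<^sup>2 = (r * cmod w) * (r * cmod w)" by (simp add: power2_eq_square)
  also have "\<dots> \<le> (R / 2) * (r * cmod w)" using rw r by (intro mult_right_mono) auto
  finally have "r\<^sup>2 * (cmod w)\<^sup>2 \<le> R * (r * cmod w) / 2" by simp
  then have key: "R\<^sup>2 - s\<^sup>2 \<ge> r * R * cmod w / 2" using s2le by (simp add: algebra_simps)
  have "r * R * cmod w / 2 \<ge> 0" using r R by simp
  then have "s\<^sup>2 \<le> R\<^sup>2" using key by linarith
  then have "s \<le> R" using R power2_le_imp_le[of s R] by simp
  then show "dist (q + of_real R * n) (q + r *\<^sub>R w) \<le> R" by (simp only: s_def)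
  have "cmod (of_real R * n) - cmod (r *\<^sub>R w) \<le> cmod (r *\<^sub>R w - of_real R * n)"
    using norm_triangle_ineq2[of "of_real R * n" "r *\<^sub>R w"] by (simp only: norm_minus_commute)
  then have "R - r * cmod w \<le> s" using n r R by (simp add: s_eq norm_mult)
  then have "R / 2 \<le> s" using rw by simp
  then show "R / 2 \<le> dist (q + of_real R * n) (q + r *\<^sub>R w)" by (simp only: s_def)
  have "exp (- \<alpha> * s\<^sup>2) = exp (- \<alpha> * R\<^sup>2) * exp (\<alpha> * (R\<^sup>2 - s\<^sup>2))"
    by (simp add: exp_add[symmetric] algebra_simps)
  also have "\<dots> \<ge> exp (- \<alpha> * R\<^sup>2) * (1 + \<alpha> * (R\<^sup>2 - s\<^sup>2))"
    by (intro mult_left_mono exp_ge_add_one_self) auto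
  finally have "gb \<alpha> (q + of_real R * n) R (q + r *\<^sub>R w) \<ge> exp (- \<alpha> * R\<^sup>2) * (\<alpha> * (R\<^sup>2 - s\<^sup>2))"
    unfolding gb_def s_def by (simp add: dist_norm norm_minus_commute algebra_simps)
  moreover have "\<alpha> * (R\<^sup>2 - s\<^sup>2) \<ge> \<alpha> * (r * R / 4)"
  proof -
    have "r * R * cmod w / 2 \<ge> r * R * (1/2) / 2" using w2 r R by (intro divide_right_mono mult_left_mono) auto
    then have "R\<^sup>2 - s\<^sup>2 \<ge> r * R / 4" using key by (simp add: algebra_simps)
    then show ?thesis using al by (intro mult_left_mono) auto
  qed
  then have "exp (- \<alpha> * R\<^sup>2) * (\<alpha> * (R\<^sup>2 - s\<^sup>2)) \<ge> exp (- \<alpha> * R\<^sup>2) * (\<alpha> * (r * R / 4))"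
    by (rule mult_left_mono) auto
  moreover have "exp (- \<alpha> * R\<^sup>2) * (\<alpha> * (r * R / 4)) = exp (- \<alpha> * R\<^sup>2) * \<alpha> * r * R / 4" by simp
  ultimately show "gb \<alpha> (q + of_real R * n) R (q + r *\<^sub>R w) \<ge> exp (- \<alpha> * R\<^sup>2) * \<alpha> * r * R / 4"
    by linarith
qed

lemma zero_nbhd:
  fixes h :: "complex \<Rightarrow> real"
  assumes rho: "rho > 0" and hc: "continuous_on (cball z0 rho) h"
    and hnn: "\<And>z. z \<in> cball z0 rho \<Longrightarrow> h z \<ge> 0" and h0: "h z0 = 0" and K: "K \<ge> 0"
    and weak: "\<And>q r e. 0 < e \<Longrightarrow> e \<le> r \<Longrightarrow> cball q r \<subseteq> ball z0 rho \<Longrightarrow>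
        (\<integral>z. h z * laplacian (psi q r e) z \<partial>lborel) \<le> K * (\<integral>z. h z * psi q r e z \<partial>lborel)"
  shows "\<exists>\<delta>>0. \<forall>z\<in>ball z0 \<delta>. h z = 0"
proof (rule ccontr)
  assume "\<not> (\<exists>\<delta>>0. \<forall>z\<in>ball z0 \<delta>. h z = 0)"
  then obtain x where x: "x \<in> ball z0 (rho/4)" "h x \<noteq> 0" using rho
    by (metis divide_pos_pos zero_less_numeral)
  define Z where "Z = {z \<in> cball z0 (rho/2). h z = 0}"
  have Zc: "closed Z" unfolding Z_def
    by (rule continuous_closed_preimage_constant) (use hc rho in \<open>auto intro: continuous_on_subset\<close>)
  have z0Z: "z0 \<in> Z" using rho h0 by (simp add: Z_def)
  obtain q where q: "q \<in> Z" "\<And>z. z \<in> Z \<Longrightarrow> dist x q \<le> dist x z"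
    using distance_attains_inf[OF Zc, of x] z0Z by blast
  define d where "d = dist x q"
  have xin: "x \<in> cball z0 (rho/2)" using x rho by auto
  have xZ: "x \<notin> Z" using x by (simp add: Z_def)
  have d0: "d > 0" using q xZ by (auto simp: d_def)
  have dle: "d < rho/4" using q(2)[OF z0Z] x by (simp add: d_def dist_commute)
  have hq: "h q = 0" and qin: "q \<in> cball z0 (rho/2)" using q by (auto simp: Z_def)
  have hpos: "h z > 0" if "z \<in> ball x d" for z
  proof -
    have "dist z0 z \<le> dist z0 x + dist x z" by (rule dist_triangle)
    then have zin: "z \<in> cball z0 (rho/2)" using that x dle by auto
    have "z \<notin> Z"
    proof
      assume "z \<in> Z" then have "dist x q \<le> dist x z" by (rule q(2))
      then show False using that by (simp add: d_def)
    qed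
    then have "h z \<noteq> 0" using zin by (simp add: Z_def)
    moreover have "h z \<ge> 0" using hnn zin rho by auto
    ultimately show ?thesis by simp
  qed
  define R where "R = d / 2"
  have R: "R > 0" using d0 by (simp add: R_def)
  define n where "n = (x - q) / of_real d"
  have n: "cmod n = 1" using d0 by (simp add: n_def norm_divide d_def dist_norm)
  define y where "y = q + of_real R * n"
  have y_eq: "y = (x + q) / 2" using d0 by (simp add: y_def n_def R_def field_simps)
  have dyq: "dist y q = R" using n R by (simp add: y_def dist_norm norm_mult)
  have dxy: "dist x y = R" using d0 by (simp add: y_eq R_def d_def dist_norm field_simps norm_divide)
  have cballR: "cball y R \<subseteq> cball z0 (rho/2)"
  proof
    fix z assume "z \<in> cball y R"
    then have "dist y z \<le> R" by simp
    moreover have "dist z0 z \<le> dist z0 x + dist x y + dist y z"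
      by (metis add.commute add_le_cancel_left dist_triangle order_trans)
    ultimately show "z \<in> cball z0 (rho/2)" using x dxy dle R_def by auto
  qed
  have ballR_rho: "ball y R \<subseteq> ball z0 rho"
  proof
    fix z assume "z \<in> ball y R"
    then have "z \<in> cball y R" by simp
    with cballR have "z \<in> cball z0 (rho/2)" by blast
    then show "z \<in> ball z0 rho" using rho by simp
  qed
  define C where "C = sphere y (R/2)"
  have C: "compact C" "C \<noteq> {}" unfolding C_def using R by auto
  have Cpos: "h z > 0" if "z \<in> C" for z
  proof -
    have "dist x z \<le> dist x y + dist y z" by (rule dist_triangle)
    moreover have "dist y z = R/2" using that by (simp add: C_def)
    ultimately have "dist x z < d" using dxy d0 unfolding R_def by linarith
    then show ?thesis using hpos by simp
  qed
  have "cball z0 (rho/2) \<subseteq> cball z0 rho" using rho by (intro subset_cball) auto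
  with cballR have cR: "cball y R \<subseteq> cball z0 rho" by (rule subset_trans)
  have hcR: "continuous_on (cball y R) h" using hc cR by (rule continuous_on_subset)
  have CR: "C \<subseteq> cball y R" using R by (auto simp: C_def)
  obtain zm where zm: "zm \<in> C" "\<And>z. z \<in> C \<Longrightarrow> h zm \<le> h z"
    using continuous_attains_inf[OF C continuous_on_subset[OF hcR CR]] by blast
  define m0 where "m0 = h zm"
  have m0: "m0 > 0" using Cpos zm by (simp add: m0_def)
  define \<alpha> where "\<alpha> = 1 + (8 + 4 * K) / R\<^sup>2"
  have al0: "(8 + 4 * K) / R\<^sup>2 \<ge> 0" using K R by (intro divide_nonneg_pos) auto
  have al: "\<alpha> \<ge> 1" "\<alpha> > 0" using al0 unfolding \<alpha>_def by auto
  have alR: "\<alpha> * R\<^sup>2 \<ge> 8 + 4 * K"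
  proof -
    have "\<alpha> * R\<^sup>2 = R\<^sup>2 + (8 + 4 * K)" using R by (simp add: \<alpha>_def field_simps)
    then show ?thesis by simp
  qed
  have alK: "4 * \<alpha>\<^sup>2 * t - 4 * \<alpha> - K > 0" if "t \<ge> R\<^sup>2 / 4" for t
  proof -
    have "4 * \<alpha>\<^sup>2 * t \<ge> 4 * \<alpha>\<^sup>2 * (R\<^sup>2 / 4)" using that by (intro mult_left_mono) auto
    also have "4 * \<alpha>\<^sup>2 * (R\<^sup>2 / 4) = \<alpha> * (\<alpha> * R\<^sup>2)" by (simp add: power2_eq_square)
    also have "\<alpha> * (\<alpha> * R\<^sup>2) \<ge> \<alpha> * (8 + 4 * K)" using alR al by (intro mult_left_mono) auto
    finally have "4 * \<alpha>\<^sup>2 * t \<ge> \<alpha> * (8 + 4 * K)" .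
    moreover have e1: "\<alpha> * (8 + 4 * K) = 4 * \<alpha> + \<alpha> * (4 + 4 * K)" by (simp add: algebra_simps)
    moreover have "\<alpha> * (4 + 4 * K) \<ge> 1 * (4 + 4 * K)" using al K by (intro mult_right_mono) auto
    ultimately have "4 * \<alpha>\<^sup>2 * t \<ge> 4 * \<alpha> + (4 + 4 * K)" by simp
    then show ?thesis using K by simp
  qed
  define den where "den = exp (- \<alpha> * (R/2)\<^sup>2) - exp (- \<alpha> * R\<^sup>2)"
  have den: "den > 0" unfolding den_def using al R by (simp add: power2_eq_square)
  define m where "m = m0 / den"
  have m: "m > 0" using m0 den by (simp add: m_def)
  have hin: "h z \<ge> m * gb \<alpha> y R z" if "dist y z = R / 2" for z
  proof -
    have "cmod (z - y) = R / 2" using that by (simp add: dist_norm norm_minus_commute)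
    then have "gb \<alpha> y R z = den" unfolding gb_def den_def by (simp only:)
    then have "m * gb \<alpha> y R z = m0" using den by (simp add: m_def)
    moreover have "z \<in> C" using that by (simp add: C_def)
    ultimately show ?thesis using zm(2) m0_def by simp
  qed
  have lowA: "h z \<ge> m * gb \<alpha> y R z" if "R / 2 \<le> dist y z" "dist y z \<le> R" for z
  proof (rule annulus_min[OF R K al(2) alK m hcR hin _ _ that])
    show "\<And>z. z \<in> cball y R \<Longrightarrow> h z \<ge> 0" using hnn cR by blast
    fix q' r e assume "0 < e" "e \<le> r" "cball q' r \<subseteq> ball y R"
    then show "(\<integral>z. h z * laplacian (psi q' r e) z \<partial>lborel) \<le> K * (\<integral>z. h z * psi q' r e z \<partial>lborel)"
      using weak ballR_rho by blast
  qed
  define c4 where "c4 = m * (exp (- \<alpha> * R\<^sup>2) * \<alpha> * R / 4)"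
  have c4: "c4 > 0" using m al R by (simp add: c4_def)
  define U where "U = {w. 1/4 < (cmod w)\<^sup>2 \<and> (cmod w)\<^sup>2 < 1 \<and> Re (w * cnj n) > cmod w / 2}"
  have Uo: "open U" unfolding U_def
    by (intro open_Collect_conj open_Collect_less continuous_intros) auto
  have Une: "U \<noteq> {}"
  proof -
    have nn: "n * cnj n = 1" using complex_norm_square[of n] n by simp
    have "Re (of_real (3/4) * n * cnj n) = 3/4" by (simp add: mult.assoc nn)
    moreover have "cmod (of_real (3/4) * n) = 3/4" using n by (simp add: norm_mult)
    ultimately have "of_real (3/4) * n \<in> U" by (simp add: U_def power2_eq_square)
    then show ?thesis by blast
  qed
  define IU where "IU = (\<integral>w. indicator U w * Gk 0 1 w \<partial>lborel)"
  have IU: "IU > 0" unfolding IU_def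
  proof (rule integral_pos_open[OF _ _ Uo Une])
    show "integrable lborel (\<lambda>w. indicator U w * Gk 0 1 w)"
      using integrable_mult_indicator[OF _ integrable_Gk[of 1 0], of U] Uo by (simp add: borel_open)
    show "\<And>w. indicator U w * Gk 0 1 w \<ge> 0" using Gk_nonneg by simp
    fix w assume "w \<in> U"
    then have "bmp ((cmod w)\<^sup>2) > 0" by (intro bmp_pos) (auto simp: U_def)
    then show "indicator U w * Gk 0 1 w > 0" using \<open>w \<in> U\<close> BB_pos by (simp add: Gk_def)
  qed
  obtain S where S: "S > 0" "\<And>z. z \<in> cball z0 rho \<Longrightarrow> \<bar>h z\<bar> \<le> S" using cont_bound[OF hc] by blast
  define r where "r = min (R/2) (min (rho/4) (c4 * IU / (K * S * kappa + 1)))"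
  have KSk: "K * S * kappa \<ge> 0" using K S kappa_nonneg by simp
  have p: "c4 * IU / (K * S * kappa + 1) > 0" using c4 IU KSk by simp
  have r2: "r \<le> min (rho/4) (c4 * IU / (K * S * kappa + 1))" unfolding r_def by (rule min.cobounded2)
  have r: "r > 0" "r \<le> R/2" "r \<le> rho/4" "r \<le> c4 * IU / (K * S * kappa + 1)"
  proof -
    show "r > 0" using R rho p by (simp add: r_def)
    show "r \<le> R/2" unfolding r_def by (rule min.cobounded1)
    show "r \<le> rho/4" using r2 min.cobounded1 order_trans by blast
    show "r \<le> c4 * IU / (K * S * kappa + 1)" using r2 min.cobounded2 order_trans by blast
  qed
  have cq: "cball q r \<subseteq> ball z0 rho"
  proof
    fix z assume "z \<in> cball q r"
    then have "dist q z \<le> r" by simp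
    moreover have "dist z0 z \<le> dist z0 q + dist q z" by (rule dist_triangle)
    moreover have "dist z0 q \<le> rho/2" using qin by simp
    ultimately have "dist z0 z < rho" using r rho by linarith
    then show "z \<in> ball z0 rho" by simp
  qed
  have "cball q r \<subseteq> cball z0 rho" using cq ball_subset_cball by blast
  with hc have hcq: "continuous_on (cball q r) h" by (rule continuous_on_subset)
  define eta where "eta = c4 * r * IU / (2 * (kappa + 1))"
  have eta: "eta > 0" using c4 r IU kappa_nonneg by (simp add: eta_def)
  have qrho: "q \<in> cball z0 rho" using qin rho by auto
  obtain d2 where d2: "d2 > 0" "\<And>z. z \<in> cball z0 rho \<Longrightarrow> dist z q < d2 \<Longrightarrow> dist (h z) (h q) < eta"
    using hc qrho eta unfolding continuous_on_iff by metis
  define e where "e = min r (d2 / 2)"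
  have e: "0 < e" "e \<le> r" using r d2 by (auto simp: e_def)
  have "(\<integral>z. h z * laplacian (psi q r e) z \<partial>lborel) \<le> K * (\<integral>z. h z * psi q r e z \<partial>lborel)"
    by (rule weak[OF e cq])
  moreover have "(\<integral>z. h z * laplacian (psi q r e) z \<partial>lborel) =
      (\<integral>z. h z * Gk q r z \<partial>lborel) - (\<integral>z. h z * Gk q e z \<partial>lborel)"
    by (rule int_w_lap_psi[OF hcq e])
  moreover have "(\<integral>z. h z * Gk q e z \<partial>lborel) \<le> eta * kappa"
  proof (rule int_wGk_le)
    show "continuous_on (cball q e) h" using hcq e by (auto intro: continuous_on_subset)
    show "e > 0" by fact
    fix z assume z: "z \<in> cball q e"
    then have "z \<in> cball q r" using e by auto
    with cq have "z \<in> ball z0 rho" by blast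
    then have "z \<in> cball z0 rho" by simp
    moreover have "dist z q < d2" using z d2(1) by (simp add: e_def dist_commute)
    ultimately have "dist (h z) (h q) < eta" by (rule d2(2))
    then have "\<bar>h z\<bar> < eta" using hq by (simp add: dist_real_def)
    then show "h z \<le> eta" by arith
  qed
  moreover have "K * (\<integral>z. h z * psi q r e z \<partial>lborel) \<le> K * (S * (r\<^sup>2 / 4 * kappa))"
  proof (rule mult_left_mono[OF _ K])
    have "(\<integral>z. h z * psi q r e z \<partial>lborel) \<le> (\<integral>z. S * psi q r e z \<partial>lborel)"
    proof (rule integral_mono[OF integrable_Fpsi[OF hcq e]])
      show "integrable lborel (\<lambda>z. S * psi q r e z)"
        using integrable_Fpsi[of q r "\<lambda>_. S" e] e by simp
      fix z show "h z * psi q r e z \<le> S * psi q r e z"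
      proof (cases "z \<in> cball q r")
        case True
        with cq have "z \<in> ball z0 rho" by blast
        then have "h z \<le> S" using S(2)[of z] by auto
        then show ?thesis using psi_nonneg[OF e] by (intro mult_right_mono) auto
      next
        case False then show ?thesis using psi_out[OF e False] by simp
      qed
    qed
    also have "\<dots> = S * (\<integral>z. psi q r e z \<partial>lborel)" by simp
    also have "\<dots> \<le> S * (r\<^sup>2 / 4 * kappa)" using int_psi_le[OF e] S by (intro mult_left_mono) auto
    finally show "(\<integral>z. h z * psi q r e z \<partial>lborel) \<le> S * (r\<^sup>2 / 4 * kappa)" .
  qed
  moreover have "(\<integral>z. h z * Gk q r z \<partial>lborel) \<ge> c4 * r * IU"
  proof -
    have "(\<integral>z. h z * Gk q r z \<partial>lborel) = (\<integral>w. h (q + r *\<^sub>R w) * Gk 0 1 w \<partial>lborel)"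
      by (rule scale_Gk_int[OF r(1) hcq])
    also have "\<dots> \<ge> (\<integral>w. c4 * r * (indicator U w * Gk 0 1 w) \<partial>lborel)"
    proof (rule integral_mono)
      show "integrable lborel (\<lambda>w. c4 * r * (indicator U w * Gk 0 1 w))"
        using integrable_mult_indicator[OF _ integrable_Gk[of 1 0], of U] Uo by (simp add: borel_open)
      show "integrable lborel (\<lambda>w. h (q + r *\<^sub>R w) * Gk 0 1 w)"
      proof (rule integrable_cball[of 0 1])
        have "continuous_on (cball 0 1) (\<lambda>w. q + r *\<^sub>R w)" by (intro continuous_intros)
        moreover have "(\<lambda>w. q + r *\<^sub>R w) ` cball 0 1 \<subseteq> cball q r"
          using r by (auto simp: dist_norm norm_scaleR)
        ultimately have "continuous_on (cball 0 1) (\<lambda>w. h (q + r *\<^sub>R w))"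
          by (rule continuous_on_compose2[OF hcq])
        then show "continuous_on (cball 0 1) (\<lambda>w. h (q + r *\<^sub>R w) * Gk 0 1 w)"
          by (intro continuous_intros continuous_on_subset[OF cont_Gk]) auto
        fix w assume "w \<notin> cball (0::complex) 1"
        then show "h (q + r *\<^sub>R w) * Gk 0 1 w = 0" using Gk_out[of 1 w 0] by simp
      qed
      fix w
      show "c4 * r * (indicator U w * Gk 0 1 w) \<le> h (q + r *\<^sub>R w) * Gk 0 1 w"
      proof (cases "w \<in> U")
        case True
        then have wU: "1/4 < (cmod w)\<^sup>2" "(cmod w)\<^sup>2 < 1" "Re (w * cnj n) > cmod w / 2" by (auto simp: U_def)
        note g = hopf_geom[OF R n r(1,2) wU al(2), of q]
        have "h (q + r *\<^sub>R w) \<ge> m * gb \<alpha> y R (q + r *\<^sub>R w)"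
          using lowA g(1,2) by (simp add: y_def)
        also have "m * gb \<alpha> y R (q + r *\<^sub>R w) \<ge> m * (exp (- \<alpha> * R\<^sup>2) * \<alpha> * r * R / 4)"
          using g(3) m by (intro mult_left_mono) (auto simp: y_def)
        finally have "h (q + r *\<^sub>R w) \<ge> c4 * r" by (simp add: c4_def algebra_simps)
        then have "c4 * r * Gk 0 1 w \<le> h (q + r *\<^sub>R w) * Gk 0 1 w"
          using Gk_nonneg[of 0 1 w] by (rule mult_right_mono)
        then show ?thesis using True by simp
      next
        case False
        have "h (q + r *\<^sub>R w) * Gk 0 1 w \<ge> 0"
        proof (cases "w \<in> cball 0 1")
          case True
          then have "cmod w \<le> 1" by simp
          then have "r * cmod w \<le> r * 1" using r by (intro mult_left_mono) auto
          then have "q + r *\<^sub>R w \<in> cball q r" using r by (simp add: dist_norm norm_scaleR)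
          with cq have "q + r *\<^sub>R w \<in> ball z0 rho" by blast
          then have "h (q + r *\<^sub>R w) \<ge> 0" using hnn by simp
          then show ?thesis using Gk_nonneg by simp
        next
          case False then show ?thesis using Gk_out[of 1 w 0] by simp
        qed
        then show ?thesis using False by simp
      qed
    qed
    also have "(\<integral>w. c4 * r * (indicator U w * Gk 0 1 w) \<partial>lborel) = c4 * r * IU" by (simp add: IU_def)
    finally show ?thesis by simp
  qed
  ultimately have ineq: "c4 * r * IU \<le> eta * kappa + K * (S * (r\<^sup>2 / 4 * kappa))" by linarith
  have "eta * kappa \<le> c4 * r * IU / 2"
  proof -
    have "eta * kappa = (c4 * r * IU / 2) * (kappa / (kappa + 1))" by (simp add: eta_def field_simps)
    also have "\<dots> \<le> (c4 * r * IU / 2) * 1" using kappa_nonneg c4 r IU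
      by (intro mult_left_mono) auto
    finally show ?thesis by simp
  qed
  moreover have "K * (S * (r\<^sup>2 / 4 * kappa)) < c4 * r * IU / 2"
  proof -
    have "K * (S * (r\<^sup>2 / 4 * kappa)) = r * (r * (K * S * kappa)) / 4" by (simp add: power2_eq_square algebra_simps)
    also have "r * (K * S * kappa) \<le> r * (K * S * kappa + 1)" using r by simp
    also have "r * (K * S * kappa + 1) \<le> c4 * IU"
      using r(4) KSk by (simp add: field_simps)
    finally have "K * (S * (r\<^sup>2 / 4 * kappa)) \<le> r * (c4 * IU) / 4" using r by (simp add: mult_left_mono divide_right_mono)
    also have "\<dots> < c4 * r * IU / 2" using r c4 IU by (simp add: field_simps)
    finally show ?thesis .
  qed
  ultimately show False using ineq by linarith
qed

lemma weak_diff: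
  assumes um: "continuous_on (cball q r) um" and up: "continuous_on (cball q r) up"
    and fm: "continuous_on (cball q r) fm" and fp: "continuous_on (cball q r) fp"
    and e: "0 < e" "e \<le> r"
    and i1: "(\<integral>z. um z * laplacian (psi q r e) z \<partial>lborel) \<ge> (\<integral>z. fm z * psi q r e z \<partial>lborel)"
    and i2: "(\<integral>z. up z * laplacian (psi q r e) z \<partial>lborel) \<le> (\<integral>z. fp z * psi q r e z \<partial>lborel)"
  shows "(\<integral>z. (um z - up z) * laplacian (psi q r e) z \<partial>lborel) \<ge> (\<integral>z. (fm z - fp z) * psi q r e z \<partial>lborel)"
proof -
  have "(\<integral>z. (um z - up z) * laplacian (psi q r e) z \<partial>lborel) =
      (\<integral>z. um z * laplacian (psi q r e) z \<partial>lborel) - (\<integral>z. up z * laplacian (psi q r e) z \<partial>lborel)"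
    using integrable_lap[OF um e] integrable_lap[OF up e] by (simp add: left_diff_distrib)
  moreover have "(\<integral>z. (fm z - fp z) * psi q r e z \<partial>lborel) =
      (\<integral>z. fm z * psi q r e z \<partial>lborel) - (\<integral>z. fp z * psi q r e z \<partial>lborel)"
    using integrable_Fpsi[OF fm e] integrable_Fpsi[OF fp e] by (simp add: left_diff_distrib)
  ultimately show ?thesis using i1 i2 by linarith
qed

lemma ratio_chart:
  assumes cov: "\<Union>(fst ` A) = UNIV" and cmm: "conformal_metric A Gm" and cmp: "conformal_metric A Gp"
    and c: "c \<in> A" and p: "p \<in> fst c"
  shows "metric_ratio A Gm Gp p = Gm c (snd c p) / Gp c (snd c p)"
proof -
  have ex: "\<exists>d. d \<in> A \<and> p \<in> fst d" using cov by blast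
  define d where "d = (SOME d. d \<in> A \<and> p \<in> fst d)"
  have d: "d \<in> A" "p \<in> fst d" using someI_ex[OF ex] by (auto simp: d_def)
  define X where "X = (norm (deriv (trans_map c d) (snd c p)))\<^sup>2"
  have em: "Gm c (snd c p) = Gm d (snd d p) * X"
    using cmm c d p unfolding conformal_metric_def X_def by blast
  have ep: "Gp c (snd c p) = Gp d (snd d p) * X"
    using cmp c d p unfolding conformal_metric_def X_def by blast
  have "Gm c (snd c p) > 0" using cmm c p unfolding conformal_metric_def by blast
  then have X: "X \<noteq> 0" using em by auto
  have "metric_ratio A Gm Gp p = Gm d (snd d p) / Gp d (snd d p)"
    by (simp add: metric_ratio_def d_def Let_def)
  also have "\<dots> = Gm c (snd c p) / Gp c (snd c p)" using em ep X by simp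
  finally show ?thesis .
qed

lemma eq_chart:
  assumes cmm: "conformal_metric A Gm" and cmp: "conformal_metric A Gp"
    and c: "c \<in> A" and d: "d \<in> A" and q: "q \<in> fst c" "q \<in> fst d"
    and eq: "Gp c (snd c q) = Gm c (snd c q)"
  shows "Gp d (snd d q) = Gm d (snd d q)"
proof -
  define X where "X = (norm (deriv (trans_map c d) (snd c q)))\<^sup>2"
  have em: "Gm c (snd c q) = Gm d (snd d q) * X"
    using cmm c d q unfolding conformal_metric_def X_def by blast
  have ep: "Gp c (snd c q) = Gp d (snd d q) * X"
    using cmp c d q unfolding conformal_metric_def X_def by blast
  have "Gm c (snd c q) > 0" using cmm c q unfolding conformal_metric_def by blast
  then have X: "X \<noteq> 0" using em by auto
  show ?thesis using em ep eq X by simp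
qed

theorem proposition2p2:
  fixes A :: "('a::t2_space) chart set" and k :: nat
    and Phi :: "'a chart \<Rightarrow> complex \<Rightarrow> complex"
    and Gm Gp :: "'a chart \<Rightarrow> complex \<Rightarrow> real"
  assumes "riemann_surface A" and "k \<ge> 1" and "holomorphic_kdiff A k Phi"
    and "vortex_subsol A k Phi Gm" and "vortex_supersol A k Phi Gp"
  shows "\<forall>p. \<not> (is_local_max (metric_ratio A Gm Gp) p \<and> metric_ratio A Gm Gp p > 1) \<and>
         (\<forall>p. is_local_max (metric_ratio A Gm Gp) p \<and> metric_ratio A Gm Gp p = 1 \<longrightarrow>
           (\<exists>W. open W \<and> p \<in> W \<and>
              (\<forall>c\<in>A. \<forall>q\<in>W \<inter> fst c. Gp c (snd c q) = Gm c (snd c q))))"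
proof -
  have cov: "\<Union>(fst ` A) = UNIV" using assms(1) unfolding riemann_surface_def by blast
  have chart: "open (fst c) \<and> open (snd c ` fst c) \<and>
      homeomorphism (fst c) (snd c ` fst c) (snd c) (inv_into (fst c) (snd c))" if "c \<in> A" for c
    using assms(1) that unfolding riemann_surface_def by blast
  have cmm: "conformal_metric A Gm" and cmp: "conformal_metric A Gp"
    using assms(4,5) unfolding vortex_sol_def by auto
  have holo: "Phi c holomorphic_on snd c ` fst c" if "c \<in> A" for c
    using assms(3) that unfolding holomorphic_kdiff_def by blast
  have wsub: "\<And>\<psi>. test_fn (snd c ` fst c) \<psi> \<Longrightarrow> (\<forall>z. \<psi> z \<ge> 0) \<Longrightarrow>
      (\<integral>z. ln (Gm c z) * laplacian \<psi> z \<partial>lborel) \<ge>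
      (\<integral>z. 2 * (exp (ln (Gm c z)) - exp ((1 - real k) * ln (Gm c z)) * (cmod (Phi c z))\<^sup>2) * \<psi> z \<partial>lborel)"
    if "c \<in> A" for c
    using assms(4) that unfolding vortex_sol_def Let_def weak_lap_ineq_def by auto
  have wsup: "\<And>\<psi>. test_fn (snd c ` fst c) \<psi> \<Longrightarrow> (\<forall>z. \<psi> z \<ge> 0) \<Longrightarrow>
      (\<integral>z. ln (Gp c z) * laplacian \<psi> z \<partial>lborel) \<le>
      (\<integral>z. 2 * (exp (ln (Gp c z)) - exp ((1 - real k) * ln (Gp c z)) * (cmod (Phi c z))\<^sup>2) * \<psi> z \<partial>lborel)"
    if "c \<in> A" for c
    using assms(5) that unfolding vortex_sol_def Let_def weak_lap_ineq_def by auto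
  have key: "metric_ratio A Gm Gp p \<le> 1 \<and> (metric_ratio A Gm Gp p = 1 \<longrightarrow>
           (\<exists>W. open W \<and> p \<in> W \<and>
              (\<forall>c\<in>A. \<forall>q\<in>W \<inter> fst c. Gp c (snd c q) = Gm c (snd c q))))"
    if lm: "is_local_max (metric_ratio A Gm Gp) p" for p
  proof -
    obtain c where c: "c \<in> A" "p \<in> fst c" using cov by blast
    define V where "V = snd c ` fst c"
    define f where "f = snd c"
    define g where "g = inv_into (fst c) (snd c)"
    have Uo: "open (fst c)" and Vo: "open V" and hom: "homeomorphism (fst c) V f g"
      using chart[OF c(1)] by (auto simp: V_def f_def g_def)
    have fg: "\<And>x. x \<in> fst c \<Longrightarrow> g (f x) = x" "\<And>y. y \<in> V \<Longrightarrow> f (g y) = y"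
      "\<And>y. y \<in> V \<Longrightarrow> g y \<in> fst c" "\<And>x. x \<in> fst c \<Longrightarrow> f x \<in> V"
      and fc: "continuous_on (fst c) f" and gc: "continuous_on V g"
      using hom unfolding homeomorphism_def by auto
    define z0 where "z0 = f p"
    have z0V: "z0 \<in> V" using fg c by (simp add: z0_def)
    have Gmc: "continuous_on V (Gm c)" "\<And>z. z \<in> V \<Longrightarrow> Gm c z > 0"
      using cmm c(1) unfolding conformal_metric_def V_def by auto
    have Gpc: "continuous_on V (Gp c)" "\<And>z. z \<in> V \<Longrightarrow> Gp c z > 0"
      using cmp c(1) unfolding conformal_metric_def V_def by auto
    have Phic: "continuous_on V (Phi c)" using holo[OF c(1)] holomorphic_on_imp_continuous_on V_def by blast
    define um where "um z = ln (Gm c z)" for z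
    define up where "up z = ln (Gp c z)" for z
    define fm where "fm z = 2 * (exp (um z) - exp ((1 - real k) * um z) * (cmod (Phi c z))\<^sup>2)" for z
    define fp where "fp z = 2 * (exp (up z) - exp ((1 - real k) * up z) * (cmod (Phi c z))\<^sup>2)" for z
    have umc: "continuous_on V um" unfolding um_def by (intro continuous_on_ln Gmc(1)) (use Gmc(2) in force)
    have upc: "continuous_on V up" unfolding up_def by (intro continuous_on_ln Gpc(1)) (use Gpc(2) in force)
    have fmc: "continuous_on V fm" unfolding fm_def by (intro continuous_intros umc Phic)
    have fpc: "continuous_on V fp" unfolding fp_def by (intro continuous_intros upc Phic)
    have ratio: "metric_ratio A Gm Gp q = exp (um (f q) - up (f q))" if "q \<in> fst c" for q
    proof -
      have "f q \<in> V" using fg(4) that .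
      then show ?thesis using ratio_chart[OF cov cmm cmp c(1) that] Gmc(2) Gpc(2)
        by (simp add: um_def up_def f_def exp_diff)
    qed
    obtain W where W: "open W" "p \<in> W" "\<And>q. q \<in> W \<Longrightarrow> metric_ratio A Gm Gp q \<le> metric_ratio A Gm Gp p"
      using lm unfolding is_local_max_def by blast
    define V' where "V' = g -` (W \<inter> fst c) \<inter> V"
    have V'o: "open V'" unfolding V'_def using continuous_on_open_vimage[OF Vo] gc W(1) Uo by blast
    have z0V': "z0 \<in> V'" using z0V fg(1) c W by (simp add: V'_def z0_def)
    obtain rho where rho: "rho > 0" "cball z0 rho \<subseteq> V'" using open_contains_cball V'o z0V' by blast
    have V'V: "V' \<subseteq> V" by (auto simp: V'_def)
    have cV: "cball z0 rho \<subseteq> V" using rho V'V by blast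
    define w where "w z = um z - up z" for z
    have wmax: "w z \<le> w z0" if "z \<in> cball z0 rho" for z
    proof -
      have zV': "z \<in> V'" using rho that by blast
      then have gz: "g z \<in> W" "g z \<in> fst c" "z \<in> V" by (auto simp: V'_def)
      have "exp (w z) = metric_ratio A Gm Gp (g z)" using ratio[OF gz(2)] fg(2)[OF gz(3)] by (simp add: w_def)
      also have "\<dots> \<le> metric_ratio A Gm Gp p" by (rule W(3)[OF gz(1)])
      also have "\<dots> = exp (w z0)" using ratio[OF c(2)] by (simp add: w_def z0_def)
      finally show ?thesis by simp
    qed
    have rp: "metric_ratio A Gm Gp p = exp (w z0)" using ratio[OF c(2)] by (simp add: w_def z0_def)
    have cont: "continuous_on (cball q r) F" if "continuous_on V F" "cball q r \<subseteq> ball z0 rho" for F q r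
      using that cV by (meson ball_subset_cball continuous_on_subset subset_trans)
    have weak: "(\<integral>z. w z * laplacian (psi q r e) z \<partial>lborel) \<ge> (\<integral>z. (fm z - fp z) * psi q r e z \<partial>lborel)"
      if e: "0 < e" "e \<le> r" and qr: "cball q r \<subseteq> ball z0 rho" for q r e
    proof -
      have qrV: "cball q r \<subseteq> V" using qr cV ball_subset_cball by blast
      have t: "test_fn V (psi q r e)" by (rule test_psi[OF e qrV])
      have nn: "\<forall>z. psi q r e z \<ge> 0" using psi_nonneg[OF e] by blast
      have i1: "(\<integral>z. um z * laplacian (psi q r e) z \<partial>lborel) \<ge> (\<integral>z. fm z * psi q r e z \<partial>lborel)"
        using wsub[OF c(1) t[unfolded V_def] nn] by (simp add: um_def fm_def)
      have i2: "(\<integral>z. up z * laplacian (psi q r e) z \<partial>lborel) \<le> (\<integral>z. fp z * psi q r e z \<partial>lborel)"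
        using wsup[OF c(1) t[unfolded V_def] nn] by (simp add: up_def fp_def)
      show ?thesis unfolding w_def
        by (rule weak_diff[OF cont[OF umc qr] cont[OF upc qr] cont[OF fmc qr] cont[OF fpc qr] e i1 i2])
    qed
    have wc: "continuous_on (cball z0 rho) w" unfolding w_def
      by (intro continuous_intros continuous_on_subset[OF umc cV] continuous_on_subset[OF upc cV])
    have k1: "1 - real k \<le> 0" using assms(2) by simp
    have le1: "metric_ratio A Gm Gp p \<le> 1"
    proof (rule ccontr)
      assume "\<not> metric_ratio A Gm Gp p \<le> 1"
      then have "exp (w z0) > 1" using rp by simp
      then have wpos: "w z0 > 0" by (metis exp_le_one_iff not_less)
      show False
      proof (rule local_max_lemma[OF rho(1) wc wmax])
        show "continuous_on (cball z0 rho) (\<lambda>z. fm z - fp z)"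
          by (intro continuous_intros continuous_on_subset[OF fmc cV] continuous_on_subset[OF fpc cV])
        have a: "exp (um z0) > exp (up z0)" using wpos by (simp add: w_def)
        have "(1 - real k) * um z0 \<le> (1 - real k) * up z0"
          using wpos k1 by (intro mult_left_mono_neg) (auto simp: w_def)
        then have b: "exp ((1 - real k) * um z0) \<le> exp ((1 - real k) * up z0)" by simp
        have "fm z0 - fp z0 = 2 * (exp (um z0) - exp (up z0)) +
            2 * (cmod (Phi c z0))\<^sup>2 * (exp ((1 - real k) * up z0) - exp ((1 - real k) * um z0))"
          by (simp add: fm_def fp_def algebra_simps)
        moreover have "2 * (cmod (Phi c z0))\<^sup>2 * (exp ((1 - real k) * up z0) - exp ((1 - real k) * um z0)) \<ge> 0"
          using b by simp
        moreover have "2 * (exp (um z0) - exp (up z0)) > 0" using a by simp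
        ultimately show "fm z0 - fp z0 > 0" by (simp only:)
      next
        fix r e assume "0 < e" "e \<le> r" "r < rho"
        moreover then have "cball z0 r \<subseteq> ball z0 rho" by (auto simp: subset_iff)
        ultimately show "(\<integral>z. w z * laplacian (psi z0 r e) z \<partial>lborel) \<ge> (\<integral>z. (fm z - fp z) * psi z0 r e z \<partial>lborel)"
          using weak by blast
      qed
    qed
    have eqW: "\<exists>W. open W \<and> p \<in> W \<and> (\<forall>d\<in>A. \<forall>q\<in>W \<inter> fst d. Gp d (snd d q) = Gm d (snd d q))"
      if one: "metric_ratio A Gm Gp p = 1"
    proof -
      have w0: "w z0 = 0" using rp one by simp
      define h where "h z = up z - um z" for z
      have hc: "continuous_on (cball z0 rho) h" unfolding h_def
        by (intro continuous_intros continuous_on_subset[OF umc cV] continuous_on_subset[OF upc cV])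
      have hnn: "h z \<ge> 0" if "z \<in> cball z0 rho" for z using wmax[OF that] w0 by (simp add: h_def w_def)
      have h0: "h z0 = 0" using w0 by (simp add: h_def w_def)
      define a where "a z = 2 * exp (up z) + 2 * (real k - 1) * (cmod (Phi c z))\<^sup>2 * exp ((1 - real k) * um z)" for z
      have ac: "continuous_on (cball z0 rho) a" unfolding a_def
        by (intro continuous_intros continuous_on_subset[OF umc cV] continuous_on_subset[OF upc cV] continuous_on_subset[OF Phic cV])
      obtain K where K: "K > 0" "\<And>z. z \<in> cball z0 rho \<Longrightarrow> \<bar>a z\<bar> \<le> K" using cont_bound[OF ac] by blast
      have pw: "fp z - fm z \<le> K * h z" if z: "z \<in> cball z0 rho" for z
      proof -
        have hz: "h z \<ge> 0" by (rule hnn[OF z])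
        have e1: "exp (up z) - exp (um z) \<le> exp (up z) * h z"
        proof -
          have "exp (um z) = exp (up z) * exp (- h z)" by (simp add: h_def exp_diff exp_minus field_simps)
          moreover have "exp (- h z) \<ge> 1 - h z" using exp_ge_add_one_self[of "- h z"] by simp
          ultimately have "exp (um z) \<ge> exp (up z) * (1 - h z)" by (simp add: mult_left_mono)
          then show ?thesis by (simp add: algebra_simps)
        qed
        have e2: "exp ((1 - real k) * um z) - exp ((1 - real k) * up z) \<le> (real k - 1) * h z * exp ((1 - real k) * um z)"
        proof -
          have "exp ((1 - real k) * up z) = exp ((1 - real k) * um z) * exp ((1 - real k) * h z)"
            by (simp add: h_def exp_add[symmetric] algebra_simps)
          moreover have "exp ((1 - real k) * h z) \<ge> 1 + (1 - real k) * h z" by (rule exp_ge_add_one_self)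
          ultimately have "exp ((1 - real k) * up z) \<ge> exp ((1 - real k) * um z) * (1 + (1 - real k) * h z)"
            by (simp add: mult_left_mono)
          then show ?thesis by (simp add: algebra_simps)
        qed
        have "fp z - fm z = 2 * (exp (up z) - exp (um z)) +
            2 * (cmod (Phi c z))\<^sup>2 * (exp ((1 - real k) * um z) - exp ((1 - real k) * up z))"
          by (simp add: fm_def fp_def algebra_simps)
        also have "\<dots> \<le> 2 * (exp (up z) * h z) + 2 * (cmod (Phi c z))\<^sup>2 * ((real k - 1) * h z * exp ((1 - real k) * um z))"
          using e1 e2 by (intro add_mono mult_left_mono) auto
        also have "\<dots> = a z * h z" by (simp add: a_def algebra_simps)
        also have "\<dots> \<le> K * h z" using K(2)[OF z] hz by (intro mult_right_mono) auto
        finally show ?thesis .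
      qed
      have weak2: "(\<integral>z. h z * laplacian (psi q r e) z \<partial>lborel) \<le> K * (\<integral>z. h z * psi q r e z \<partial>lborel)"
        if e: "0 < e" "e \<le> r" and qr: "cball q r \<subseteq> ball z0 rho" for q r e
      proof -
        have qrc: "cball q r \<subseteq> cball z0 rho" using qr ball_subset_cball by blast
        have hq: "continuous_on (cball q r) h" using hc qrc by (rule continuous_on_subset)
        have fmq: "continuous_on (cball q r) fm" "continuous_on (cball q r) fp"
          using cont[OF fmc qr] cont[OF fpc qr] .
        have "(\<lambda>z. h z * laplacian (psi q r e) z) = (\<lambda>z. - (w z * laplacian (psi q r e) z))"
          by (simp add: h_def w_def algebra_simps fun_eq_iff)
        then have "(\<integral>z. h z * laplacian (psi q r e) z \<partial>lborel) = - (\<integral>z. w z * laplacian (psi q r e) z \<partial>lborel)"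
          by simp
        also have "\<dots> \<le> - (\<integral>z. (fm z - fp z) * psi q r e z \<partial>lborel)" using weak[OF e qr] by simp
        also have "\<dots> = (\<integral>z. (fp z - fm z) * psi q r e z \<partial>lborel)"
        proof -
          have "(\<lambda>z. (fp z - fm z) * psi q r e z) = (\<lambda>z. - ((fm z - fp z) * psi q r e z))"
            by (simp add: algebra_simps fun_eq_iff)
          then show ?thesis by simp
        qed
        also have "\<dots> \<le> (\<integral>z. K * (h z * psi q r e z) \<partial>lborel)"
        proof (rule integral_mono)
          show "integrable lborel (\<lambda>z. (fp z - fm z) * psi q r e z)"
            by (rule integrable_Fpsi[OF _ e]) (intro continuous_intros fmq)
          show "integrable lborel (\<lambda>z. K * (h z * psi q r e z))"
            using integrable_Fpsi[OF hq e] by simp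
          fix z show "(fp z - fm z) * psi q r e z \<le> K * (h z * psi q r e z)"
          proof (cases "z \<in> cball q r")
            case True
            then have "fp z - fm z \<le> K * h z" using pw qrc by blast
            then have "(fp z - fm z) * psi q r e z \<le> (K * h z) * psi q r e z"
              using psi_nonneg[OF e] by (intro mult_right_mono) auto
            then show ?thesis by (simp add: algebra_simps)
          next
            case False then show ?thesis using psi_out[OF e False] by simp
          qed
        qed
        also have "\<dots> = K * (\<integral>z. h z * psi q r e z \<partial>lborel)" by simp
        finally show ?thesis .
      qed
      obtain \<delta> where \<delta>: "\<delta> > 0" "\<And>z. z \<in> ball z0 \<delta> \<Longrightarrow> h z = 0"
        using zero_nbhd[OF rho(1) hc hnn h0 less_imp_le[OF K(1)] weak2] by blast
      define W' where "W' = f -` ball z0 \<delta> \<inter> fst c"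
      have W'o: "open W'" unfolding W'_def using continuous_on_open_vimage[OF Uo] fc by blast
      have pW': "p \<in> W'" using \<delta> c by (simp add: W'_def z0_def)
      have "Gp d (snd d q) = Gm d (snd d q)" if d: "d \<in> A" and q: "q \<in> W' \<inter> fst d" for d q
      proof -
        have qc: "q \<in> fst c" and fq: "f q \<in> ball z0 \<delta>" using q by (auto simp: W'_def)
        have fqV: "f q \<in> V" using fg(4)[OF qc] .
        have "h (f q) = 0" by (rule \<delta>(2)[OF fq])
        then have "ln (Gp c (f q)) = ln (Gm c (f q))" by (simp add: h_def up_def um_def)
        then have "Gp c (snd c q) = Gm c (snd c q)" using Gmc(2)[OF fqV] Gpc(2)[OF fqV] by (simp add: f_def)
        then show ?thesis using eq_chart[OF cmm cmp c(1) d qc] q by blast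
      qed
      then show ?thesis using W'o pW' by blast
    qed
    show ?thesis using le1 eqW by blast
  qed
  show ?thesis using key by fastforce
qed

end
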